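(* Let $p\ge 4$ and let $\langle S_0,S_1,\dots,S_p,S_{p+1}\rangle$ be a partition of $V$ with $S_0=\{0\}$, $S_{p+1}=\{n\}$, and $|S_i|\ge 2$ for $i=1,\dots,p$ (so in particular $p\le n-1$). The jump inequality $$\sum_{i=0}^{p-1}\sum_{j=i+2}^{p+1}x((S_i:S_j))-x((S_{p-1}\cup S_p:S_1\cup S_2))\ge 1$$ is valid for $P^p_{0,n}(D)$ and defines a facet of $P^p_{0,n}(D)$.
   Context: Let $n$ be a positive integer, $V=\{0,1,\dots,n\}$, and let $D=(V,A)$ be the digraph whose arc set $A$ consists of all ordered pairs $(i,j)$ with $i\neq j$, $i,j\in V$, except that no arc enters node $0$, no arc leaves node $n$, and the arc $(0,n)$ is absent. A $(0,n)$-$p$-path is a simple directed path in $D$ from $0$ to $n$ with exactly $p$ arcs. $P^p_{0,n}(D)\subseteq\mathbb{R}^A$ is the convex hull of the incidence vectors of all $(0,n)$-$p$-paths. For $F\subseteq A$, $x(F)=\sum_{(i,j)\in F}x_{ij}$. For node sets $S,T$, $(S:T)=\{(i,j)\in A: i\in S, j\in T\}$. *)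

theory Defs
  imports "HOL-Analysis.Analysis" "HOL-Library.Function_Algebras"
begin

text \<open>Real-valued functions on an arbitrary index type form a real vector space
  (pointwise operations). Points of R^A are represented as functions on arc pairs
  that vanish outside A.\<close>

instantiation "fun" :: (type, real_vector) real_vector
begin
definition scaleR_fun :: "real \<Rightarrow> ('a \<Rightarrow> 'b) \<Rightarrow> 'a \<Rightarrow> 'b" where
  "scaleR_fun c f = (\<lambda>x. c *\<^sub>R f x)"
instance
  by standard (auto simp: scaleR_fun_def fun_eq_iff scaleR_add_right scaleR_add_left)
end

definition arcs :: "nat \<Rightarrow> (nat \<times> nat) set" where
  "arcs n = {(i, j). i \<le> n \<and> j \<le> n \<and> i \<noteq> j \<and> j \<noteq> 0 \<and> i \<noteq> n \<and> (i, j) \<noteq> (0, n)}"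

definition arcs_between :: "nat \<Rightarrow> nat set \<Rightarrow> nat set \<Rightarrow> (nat \<times> nat) set" where
  "arcs_between n S T = {(i, j) \<in> arcs n. i \<in> S \<and> j \<in> T}"

definition xsum :: "((nat \<times> nat) \<Rightarrow> real) \<Rightarrow> (nat \<times> nat) set \<Rightarrow> real" where
  "xsum x F = (\<Sum>a\<in>F. x a)"

definition is_pPath :: "nat \<Rightarrow> nat \<Rightarrow> nat list \<Rightarrow> bool" where
  "is_pPath n p vs \<longleftrightarrow> length vs = p + 1 \<and> distinct vs \<and> hd vs = 0 \<and> last vs = n \<and>
     (\<forall>k<p. (vs ! k, vs ! (k + 1)) \<in> arcs n)"

definition incidence :: "nat list \<Rightarrow> (nat \<times> nat) \<Rightarrow> real" where
  "incidence vs = (\<lambda>a. if a \<in> set (zip vs (tl vs)) then 1 else 0)"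

definition pathPolytope :: "nat \<Rightarrow> nat \<Rightarrow> ((nat \<times> nat) \<Rightarrow> real) set" where
  "pathPolytope n p = convex hull {incidence vs | vs. is_pPath n p vs}"

definition adim :: "('a::real_vector) set \<Rightarrow> int" where
  "adim S = (if S = {} then -1 else int (dim {x - y | x y. x \<in> S \<and> y \<in> S}))"

definition is_facet :: "('a::real_vector) set \<Rightarrow> 'a set \<Rightarrow> bool" where
  "is_facet F P \<longleftrightarrow> F face_of P \<and> adim F = adim P - 1"

definition jump_lhs :: "nat \<Rightarrow> nat \<Rightarrow> (nat \<Rightarrow> nat set) \<Rightarrow> ((nat \<times> nat) \<Rightarrow> real) \<Rightarrow> real" where
  "jump_lhs n p S x =
     (\<Sum>i<p. \<Sum>j\<in>{i+2..p+1}. xsum x (arcs_between n (S i) (S j)))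
     - xsum x (arcs_between n (S (p - 1) \<union> S p) (S 1 \<union> S 2))"

end

theory Submission
  imports Defs
begin

fun psum :: "('a \<Rightarrow> 'a \<Rightarrow> real) \<Rightarrow> 'a list \<Rightarrow> real" where
  "psum f (x # y # zs) = f x y + psum f (y # zs)"
| "psum f _ = 0"

lemma psum_zip: "psum f xs = sum_list (map (\<lambda>(a,b). f a b) (zip xs (tl xs)))"
  by (induction f xs rule: psum.induct) auto

lemma psum_Cons: "psum f (x # ys) = (if ys = [] then 0 else f x (hd ys) + psum f ys)"
  by (cases ys) auto

lemma psum_append:
  "xs \<noteq> [] \<Longrightarrow> ys \<noteq> [] \<Longrightarrow> psum f (xs @ ys) = psum f xs + f (last xs) (hd ys) + psum f ys"
proof (induction xs)
  case Nil then show ?case by simp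
next
  case (Cons x xs)
  then show ?case
    by (cases xs) (auto simp: psum_Cons)
qed

lemma psum_map: "psum f (map g xs) = psum (\<lambda>a b. f (g a) (g b)) xs"
  by (induction "(\<lambda>a b. f (g a) (g b))" xs rule: psum.induct) auto

lemma psum_add: "psum (\<lambda>a b. f a b + g a b) xs = psum f xs + psum g xs"
  by (induction "(\<lambda>a b. f a b + g a b)" xs rule: psum.induct) auto

lemma psum_diff: "psum (\<lambda>a b. f a b - g a b) xs = psum f xs - psum g xs"
  by (induction "(\<lambda>a b. f a b - g a b)" xs rule: psum.induct) auto

lemma psum_cmult: "psum (\<lambda>a b. c * f a b) xs = c * psum f xs"
  by (induction "(\<lambda>a b. c * f a b)" xs rule: psum.induct) (auto simp: algebra_simps)

lemma psum_const: "psum (\<lambda>a b. c) xs = c * (length xs - 1)"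
  by (induction "(\<lambda>(a::'a) (b::'a). c)" xs rule: psum.induct) (auto simp: algebra_simps)

lemma psum_tele: "xs \<noteq> [] \<Longrightarrow> psum (\<lambda>a b. g b - g a) xs = g (last xs) - g (hd xs)"
  by (induction "(\<lambda>a b. g b - g a)" xs rule: psum.induct) auto

lemma psum_zero: "(\<And>k. Suc k < length xs \<Longrightarrow> f (xs!k) (xs!Suc k) = 0) \<Longrightarrow> psum f xs = 0"
proof (induction f xs rule: psum.induct)
  case (1 f x y zs)
  have "f x y = 0" using "1.prems"[of 0] by simp
  moreover have "psum f (y # zs) = 0"
    using "1.prems" by (intro "1.IH") (metis Suc_less_eq length_Cons nth_Cons_Suc)
  ultimately show ?case by simp
qed auto

lemma psum_upt: "psum f (map g [a..<b]) = (\<Sum>t\<in>{a..<b-1}. f (g t) (g (Suc t)))"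
proof (induction b)
  case 0 then show ?case by simp
next
  case (Suc b)
  show ?case
  proof (cases "a < b")
    case True
    have "map g [a..<Suc b] = map g [a..<b] @ [g b]" using True by simp
    then have "psum f (map g [a..<Suc b]) = psum f (map g [a..<b]) + f (g (b-1)) (g b)"
      using True by (simp add: psum_append last_map)
    also have "\<dots> = (\<Sum>t\<in>{a..<b-1}. f (g t) (g (Suc t))) + f (g (b-1)) (g b)" using Suc by simp
    also have "\<dots> = (\<Sum>t\<in>{a..<Suc b - 1}. f (g t) (g (Suc t)))"
      using True by (cases b) (auto simp: sum.atLeastLessThan_Suc)
    finally show ?thesis .
  next
    case False
    then show ?thesis by (cases "a = b") auto
  qed
qed

locale JS =
  fixes n p :: nat and S :: "nat \<Rightarrow> nat set"
  assumes n_pos: "n > 0" and p4: "p \<ge> 4"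
    and S_sub: "\<And>i. i \<le> p + 1 \<Longrightarrow> S i \<subseteq> {0..n}"
    and S_cover: "(\<Union>i\<in>{0..p+1}. S i) = {0..n}"
    and S_disj: "\<And>i j. i \<le> p + 1 \<Longrightarrow> j \<le> p + 1 \<Longrightarrow> i \<noteq> j \<Longrightarrow> S i \<inter> S j = {}"
    and S0: "S 0 = {0}" and Sp1: "S (p + 1) = {n}"
    and S_card: "\<And>i. 1 \<le> i \<Longrightarrow> i \<le> p \<Longrightarrow> card (S i) \<ge> 2"
begin

definition lay :: "nat \<Rightarrow> nat" where
  "lay v = (THE i. i \<le> p + 1 \<and> v \<in> S i)"

lemma lay_eq: "v \<in> S t \<Longrightarrow> t \<le> p + 1 \<Longrightarrow> lay v = t"
  unfolding lay_def
  by (rule the_equality) (use S_disj in blast)+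

lemma lay_ex: "v \<le> n \<Longrightarrow> \<exists>t\<le>p+1. v \<in> S t"
proof -
  assume "v \<le> n"
  then have "v \<in> (\<Union>i\<in>{0..p+1}. S i)" using S_cover by auto
  then show ?thesis by auto
qed

lemma lay_mem: "v \<le> n \<Longrightarrow> v \<in> S (lay v) \<and> lay v \<le> p + 1"
proof -
  assume "v \<le> n"
  then obtain t where t: "t \<le> p + 1" "v \<in> S t" using lay_ex by blast
  then have "lay v = t" using lay_eq by blast
  then show ?thesis using t by simp
qed

lemma mem_S_iff: "v \<le> n \<Longrightarrow> t \<le> p + 1 \<Longrightarrow> v \<in> S t \<longleftrightarrow> lay v = t"
  using lay_eq lay_mem by metis

lemma in_S_le: "v \<in> S t \<Longrightarrow> t \<le> p + 1 \<Longrightarrow> v \<le> n"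
  using S_sub[of t] by auto

lemma S_same: "v \<in> S t \<Longrightarrow> v \<in> S t' \<Longrightarrow> t \<le> p + 1 \<Longrightarrow> t' \<le> p + 1 \<Longrightarrow> t = t'"
proof (rule ccontr)
  assume a: "v \<in> S t" "v \<in> S t'" "t \<le> p + 1" "t' \<le> p + 1" "t \<noteq> t'"
  then have "S t \<inter> S t' = {}" using S_disj by simp
  then show False using a by blast
qed

lemma lay0[simp]: "lay 0 = 0" using lay_eq[of 0 0] S0 by simp
lemma layn[simp]: "lay n = p + 1" using lay_eq[of n "p+1"] Sp1 by simp

lemma lay_0_iff: "v \<le> n \<Longrightarrow> lay v = 0 \<longleftrightarrow> v = 0"
proof -
  assume v: "v \<le> n"
  show ?thesis
  proof
    assume "lay v = 0"
    then have "v \<in> S 0" using lay_mem[OF v] by simp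
    then show "v = 0" using S0 by simp
  qed simp
qed

lemma lay_n_iff: "v \<le> n \<Longrightarrow> lay v = p + 1 \<longleftrightarrow> v = n"
proof -
  assume v: "v \<le> n"
  show ?thesis
  proof
    assume "lay v = p + 1"
    then have "v \<in> S (p + 1)" using lay_mem[OF v] by simp
    then show "v = n" using Sp1 by simp
  qed simp
qed

lemma S_fin: "i \<le> p + 1 \<Longrightarrow> finite (S i)"
proof -
  assume "i \<le> p + 1"
  then have "S i \<subseteq> {0..n}" by (rule S_sub)
  then show ?thesis by (rule finite_subset) simp
qed

lemma two_elems: "1 \<le> i \<Longrightarrow> i \<le> p \<Longrightarrow> v \<in> S i \<Longrightarrow> \<exists>u\<in>S i. u \<noteq> v"
proof (rule ccontr)
  assume a: "1 \<le> i" "i \<le> p" "v \<in> S i" "\<not> (\<exists>u\<in>S i. u \<noteq> v)"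
  then have "S i \<subseteq> {v}" by blast
  then have "card (S i) \<le> card {v}" by (intro card_mono) simp_all
  then show False using S_card[OF a(1,2)] by simp
qed

lemma S_ne: "i \<le> p + 1 \<Longrightarrow> S i \<noteq> {}"
proof -
  assume i: "i \<le> p + 1"
  show ?thesis
  proof (cases "i = 0 \<or> i = p + 1")
    case True then show ?thesis using S0 Sp1 by auto
  next
    case False
    then have "card (S i) \<ge> 2" using S_card[of i] i by simp
    then show ?thesis by (metis card.empty not_numeral_le_zero)
  qed
qed

definition Dl :: "nat \<Rightarrow> nat \<Rightarrow> real" where
  "Dl a b = (if a < p \<and> a + 2 \<le> b then 1 else 0) - (if (a = p - 1 \<or> a = p) \<and> (b = 1 \<or> b = 2) then 1 else 0)"

definition dl :: "nat \<times> nat \<Rightarrow> real" where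
  "dl e = Dl (lay (fst e)) (lay (snd e))"

lemma arcs_le: "e \<in> arcs n \<Longrightarrow> fst e \<le> n \<and> snd e \<le> n"
  by (auto simp: arcs_def)

lemma finite_arcs: "finite (arcs n)"
proof -
  have "arcs n \<subseteq> {0..n} \<times> {0..n}" by (auto simp: arcs_def)
  then show ?thesis by (rule finite_subset) simp
qed

lemma arcs_between_lay: "i \<le> p + 1 \<Longrightarrow> j \<le> p + 1 \<Longrightarrow>
  arcs_between n (S i) (S j) = {e \<in> arcs n. lay (fst e) = i \<and> lay (snd e) = j}"
  unfolding arcs_between_def
  using lay_eq lay_mem arcs_le by fastforce

lemma xsum_filter: "xsum x {e \<in> arcs n. P e} = (\<Sum>e\<in>arcs n. (if P e then 1 else 0) * x e)"
  unfolding xsum_def using finite_arcs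
  by (auto simp: sum.inter_filter intro!: sum.cong)


lemma jump_part1:
  "(\<Sum>i<p. \<Sum>j\<in>{i+2..p+1}. xsum x (arcs_between n (S i) (S j)))
   = (\<Sum>e\<in>arcs n. (if lay (fst e) < p \<and> lay (fst e) + 2 \<le> lay (snd e) then 1 else 0) * x e)"
proof -
  have "(\<Sum>i<p. \<Sum>j\<in>{i+2..p+1}. xsum x (arcs_between n (S i) (S j)))
      = (\<Sum>i<p. \<Sum>j\<in>{i+2..p+1}. \<Sum>e\<in>arcs n. (if lay (fst e) = i \<and> lay (snd e) = j then 1 else 0) * x e)"
    by (intro sum.cong refl) (simp add: arcs_between_lay xsum_filter)
  also have "\<dots> = (\<Sum>e\<in>arcs n. \<Sum>i<p. \<Sum>j\<in>{i+2..p+1}. (if lay (fst e) = i \<and> lay (snd e) = j then 1 else 0) * x e)"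
    by (simp add: sum.swap[of _ "arcs n"] sum.swap[of _ "{_..p+1}"])
  also have "\<dots> = (\<Sum>e\<in>arcs n. (if lay (fst e) < p \<and> lay (fst e) + 2 \<le> lay (snd e) then 1 else 0) * x e)"
  proof (intro sum.cong refl)
    fix e assume e: "e \<in> arcs n"
    have ls: "lay (snd e) \<le> p + 1" using lay_mem arcs_le[OF e] by blast
    have "(\<Sum>i<p. \<Sum>j\<in>{i+2..p+1}. (if lay (fst e) = i \<and> lay (snd e) = j then 1 else 0) * x e)
        = (\<Sum>i<p. if lay (fst e) = i \<and> i + 2 \<le> lay (snd e) then x e else 0)"
    proof (intro sum.cong refl)
      fix i
      have "(\<Sum>j\<in>{i+2..p+1}. (if lay (fst e) = i \<and> lay (snd e) = j then 1 else 0) * x e)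
         = (\<Sum>j\<in>{i+2..p+1}. if lay (snd e) = j then (if lay (fst e) = i then x e else 0) else 0)"
        by (intro sum.cong refl) auto
      also have "\<dots> = (if lay (fst e) = i \<and> i + 2 \<le> lay (snd e) then x e else 0)"
        using ls by (simp add: sum.delta)
      finally show "(\<Sum>j\<in>{i+2..p+1}. (if lay (fst e) = i \<and> lay (snd e) = j then 1 else 0) * x e)
         = (if lay (fst e) = i \<and> i + 2 \<le> lay (snd e) then x e else 0)" .
    qed
    also have "\<dots> = (if lay (fst e) < p \<and> lay (fst e) + 2 \<le> lay (snd e) then 1 else 0) * x e"
    proof -
      have "(\<Sum>i<p. if lay (fst e) = i \<and> i + 2 \<le> lay (snd e) then x e else 0)
          = (\<Sum>i<p. if lay (fst e) = i then (if lay (fst e) + 2 \<le> lay (snd e) then x e else 0) else 0)"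
        by (intro sum.cong refl) auto
      also have "\<dots> = (if lay (fst e) < p \<and> lay (fst e) + 2 \<le> lay (snd e) then 1 else 0) * x e"
        by (simp add: sum.delta)
      finally show ?thesis .
    qed
    finally show "(\<Sum>i<p. \<Sum>j\<in>{i+2..p+1}. (if lay (fst e) = i \<and> lay (snd e) = j then 1 else 0) * x e)
        = (if lay (fst e) < p \<and> lay (fst e) + 2 \<le> lay (snd e) then 1 else 0) * x e" .
  qed
  finally show ?thesis .
qed

lemma jump_part2:
  "xsum x (arcs_between n (S (p - 1) \<union> S p) (S 1 \<union> S 2))
   = (\<Sum>e\<in>arcs n. (if (lay (fst e) = p - 1 \<or> lay (fst e) = p) \<and> (lay (snd e) = 1 \<or> lay (snd e) = 2) then 1 else 0) * x e)"
proof -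
  have "arcs_between n (S (p - 1) \<union> S p) (S 1 \<union> S 2)
     = {e \<in> arcs n. (lay (fst e) = p - 1 \<or> lay (fst e) = p) \<and> (lay (snd e) = 1 \<or> lay (snd e) = 2)}"
  proof -
    have p1: "p - 1 \<le> p + 1" "p \<le> p + 1" "1 \<le> p + 1" "2 \<le> p + 1" using p4 by auto
    show ?thesis unfolding arcs_between_def
    proof (rule Collect_cong)
      fix e :: "nat \<times> nat"
      show "(case e of (i, j) \<Rightarrow> (i, j) \<in> arcs n \<and> i \<in> S (p - 1) \<union> S p \<and> j \<in> S 1 \<union> S 2) =
        (e \<in> arcs n \<and> (lay (fst e) = p - 1 \<or> lay (fst e) = p) \<and> (lay (snd e) = 1 \<or> lay (snd e) = 2))"
      proof (cases "e \<in> arcs n")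
        case True
        then have le: "fst e \<le> n" "snd e \<le> n" using arcs_le by auto
        show ?thesis
          using True mem_S_iff[OF le(1) p1(1)] mem_S_iff[OF le(1) p1(2)] mem_S_iff[OF le(2) p1(3)] mem_S_iff[OF le(2) p1(4)]
          by (cases e) simp
      next
        case False then show ?thesis by (cases e) simp
      qed
    qed
  qed
  then show ?thesis by (simp add: xsum_filter)
qed

lemma jump_lhs_eq: "jump_lhs n p S x = (\<Sum>e\<in>arcs n. dl e * x e)"
  unfolding jump_lhs_def jump_part1 jump_part2 dl_def Dl_def
  by (simp add: sum_subtractf[symmetric] left_diff_distrib)

lemma psum_nth: "psum f xs = (\<Sum>k<length xs - 1. f (xs!k) (xs!Suc k))"
proof (induction f xs rule: psum.induct)
  case (1 f x y zs)
  have "(\<Sum>k<length (x # y # zs) - 1. f ((x # y # zs)!k) ((x # y # zs)!Suc k))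
      = f x y + (\<Sum>k<length (y # zs) - 1. f ((y # zs)!k) ((y # zs)!Suc k))"
    by (simp add: sum.lessThan_Suc_shift del: sum.lessThan_Suc)
  then show ?case using 1 by simp
qed auto

lemma path_arc: "is_pPath n p vs \<Longrightarrow> k < p \<Longrightarrow> (vs!k, vs!Suc k) \<in> arcs n"
  unfolding is_pPath_def by auto

lemma path_zip_arcs: "is_pPath n p vs \<Longrightarrow> set (zip vs (tl vs)) \<subseteq> arcs n"
proof
  fix e assume a: "is_pPath n p vs" "e \<in> set (zip vs (tl vs))"
  then obtain k where k: "k < length (zip vs (tl vs))" "e = zip vs (tl vs) ! k"
    by (metis in_set_conv_nth)
  have len: "length vs = p + 1" using a(1) by (simp add: is_pPath_def)
  have "k < p" using k len by simp
  moreover have "e = (vs!k, vs!Suc k)" using k len by (simp add: nth_tl)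
  ultimately show "e \<in> arcs n" using path_arc[OF a(1)] by simp
qed

lemma path_le: "is_pPath n p vs \<Longrightarrow> v \<in> set vs \<Longrightarrow> v \<le> n"
proof -
  assume a: "is_pPath n p vs" "v \<in> set vs"
  then obtain k where k: "k < length vs" "v = vs!k" by (metis in_set_conv_nth)
  have len: "length vs = p + 1" using a(1) by (simp add: is_pPath_def)
  show "v \<le> n"
  proof (cases "k < p")
    case True then show ?thesis using path_arc[OF a(1) True] k arcs_le by fastforce
  next
    case False
    then have "k = p" using k len by simp
    moreover have "vs \<noteq> []" using len by auto
    ultimately have "v = last vs" using k len by (simp add: last_conv_nth)
    then show ?thesis using a(1) by (simp add: is_pPath_def)
  qed
qed

lemma sum_incidence:
  assumes "is_pPath n p vs"
  shows "(\<Sum>e\<in>arcs n. f e * incidence vs e) = psum (\<lambda>a b. f (a, b)) vs"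
proof -
  have sub: "set (zip vs (tl vs)) \<subseteq> arcs n" by (rule path_zip_arcs[OF assms])
  have dz: "distinct (zip vs (tl vs))"
    using assms by (intro distinct_zipI1) (simp add: is_pPath_def)
  have "(\<Sum>e\<in>arcs n. f e * incidence vs e) = (\<Sum>e\<in>arcs n. if e \<in> set (zip vs (tl vs)) then f e else 0)"
    unfolding incidence_def by (intro sum.cong refl) auto
  also have "\<dots> = (\<Sum>e\<in>arcs n \<inter> set (zip vs (tl vs)). f e)"
    using finite_arcs by (simp add: sum.inter_restrict)
  also have "arcs n \<inter> set (zip vs (tl vs)) = set (zip vs (tl vs))" using sub by blast
  also have "(\<Sum>e\<in>set (zip vs (tl vs)). f e) = sum_list (map f (zip vs (tl vs)))"
    using dz by (simp add: sum.distinct_set_conv_list)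
  also have "\<dots> = psum (\<lambda>a b. f (a, b)) vs"
    by (simp add: psum_zip case_prod_beta')
  finally show ?thesis .
qed

definition ell :: "nat list \<Rightarrow> real" where
  "ell vs = psum (\<lambda>a b. Dl (lay a) (lay b)) vs"

lemma jump_incidence: "is_pPath n p vs \<Longrightarrow> jump_lhs n p S (incidence vs) = ell vs"
  unfolding jump_lhs_eq ell_def dl_def by (subst sum_incidence) auto

lemma Dl_step:
  assumes "m + 1 \<le> p - 1" "1 \<le> t'" "t' \<le> p" "(m = 0 \<and> t = 0) \<or> (1 \<le> t \<and> t \<le> p \<and> 1 \<le> m)"
  shows "(if t > m then 1 else 0) + Dl t t' \<ge> (if t' > m + 1 then (1::real) else 0)"
  using assms p4 unfolding Dl_def by (auto split: if_splits)

lemma Dl_last: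
  assumes "1 \<le> t" "t \<le> p"
  shows "(if t > p - 1 then 1 else 0) + Dl t (p + 1) \<ge> (1::real)"
  using assms p4 unfolding Dl_def by (auto split: if_splits)

lemma valid_path:
  assumes P: "is_pPath n p vs"
  shows "ell vs \<ge> 1"
proof -
  define L where "L k = lay (vs!k)" for k
  have len: "length vs = p + 1" using P by (simp add: is_pPath_def)
  have dist: "distinct vs" using P by (simp add: is_pPath_def)
  have ne: "vs \<noteq> []" using len by auto
  have v0: "vs!0 = 0" using P len by (simp add: is_pPath_def hd_conv_nth[OF ne, symmetric])
  have vp: "vs!p = n" using P len by (simp add: is_pPath_def last_conv_nth[OF ne])
  have vle: "vs!k \<le> n" if "k \<le> p" for k using path_le[OF P] that len by simp
  have L0: "L 0 = 0" using v0 by (simp add: L_def)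
  have Lp: "L p = p + 1" using vp by (simp add: L_def)
  have Lmid: "1 \<le> L k \<and> L k \<le> p" if "1 \<le> k" "k < p" for k
  proof -
    have kp: "k \<le> p" using that by simp
    have "vs!k \<noteq> vs!0" using that len by (simp add: nth_eq_iff_index_eq[OF dist])
    then have a: "vs!k \<noteq> 0" using v0 by simp
    have "vs!k \<noteq> vs!p" using that len by (simp add: nth_eq_iff_index_eq[OF dist])
    then have b: "vs!k \<noteq> n" using vp by simp
    have c: "L k \<le> p + 1" using lay_mem vle[OF kp] by (simp add: L_def)
    have "L k \<noteq> 0" using lay_0_iff[OF vle[OF kp]] a by (simp add: L_def)
    moreover have "L k \<noteq> p + 1" using lay_n_iff[OF vle[OF kp]] b by (simp add: L_def)
    ultimately show ?thesis using c by simp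
  qed
  have ell_eq: "ell vs = (\<Sum>k<p. Dl (L k) (L (Suc k)))"
    unfolding ell_def psum_nth L_def using len by simp
  have inv: "(\<Sum>k<m. Dl (L k) (L (Suc k))) \<ge> (if L m > m then 1 else 0)" if "m \<le> p - 1" for m
    using that
  proof (induction m)
    case 0 then show ?case using L0 by simp
  next
    case (Suc m)
    have IH: "(\<Sum>k<m. Dl (L k) (L (Suc k))) \<ge> (if L m > m then 1 else 0)" using Suc by simp
    have a: "1 \<le> L (Suc m) \<and> L (Suc m) \<le> p" using Lmid[of "Suc m"] Suc.prems p4 by simp
    have b: "(m = 0 \<and> L m = 0) \<or> (1 \<le> L m \<and> L m \<le> p \<and> 1 \<le> m)" using Lmid[of m] L0 Suc.prems p4
      by (cases "m = 0") auto
    have "(if L m > m then 1 else 0) + Dl (L m) (L (Suc m)) \<ge> (if L (Suc m) > Suc m then (1::real) else 0)"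
      using Dl_step[of m "L (Suc m)" "L m"] a b Suc.prems by simp
    then show ?case using IH by (simp only: sum.lessThan_Suc)
  qed
  have "(\<Sum>k<p. Dl (L k) (L (Suc k))) = (\<Sum>k<p-1. Dl (L k) (L (Suc k))) + Dl (L (p-1)) (L p)"
  proof -
    have e: "Suc (p - 1) = p" using p4 by simp
    show ?thesis using sum.lessThan_Suc[of "\<lambda>k. Dl (L k) (L (Suc k))" "p-1"] by (simp only: e)
  qed
  also have "\<dots> \<ge> 1"
  proof -
    have c: "1 \<le> L (p-1) \<and> L (p-1) \<le> p" using Lmid[of "p-1"] p4 by simp
    have "(if L (p-1) > p-1 then 1 else 0) + Dl (L (p-1)) (L p) \<ge> (1::real)"
      using Dl_last[of "L (p-1)"] c Lp by simp
    then show ?thesis using inv[of "p-1"] by linarith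
  qed
  finally show ?thesis using ell_eq by simp
qed

end

lemma psum_cong: "(\<And>x y. x \<in> set xs \<Longrightarrow> y \<in> set xs \<Longrightarrow> f x y = g x y) \<Longrightarrow> psum f xs = psum g xs"
  by (induction f xs rule: psum.induct) auto

definition seg :: "nat \<Rightarrow> nat \<Rightarrow> (nat \<times> bool) list" where
  "seg a b = map (\<lambda>t. (t, False)) [a..<b]"

lemma seg_ne[simp]: "a < b \<Longrightarrow> seg a b \<noteq> []" by (simp add: seg_def)
lemma seg_Nil: "b \<le> a \<Longrightarrow> seg a b = []" by (simp add: seg_def)
lemma hd_seg[simp]: "a < b \<Longrightarrow> hd (seg a b) = (a, False)" by (simp add: seg_def hd_map hd_upt)
lemma last_seg[simp]: "a < b \<Longrightarrow> last (seg a b) = (b - 1, False)" by (simp add: seg_def last_map)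
lemma length_seg[simp]: "length (seg a b) = b - a" by (simp add: seg_def)
lemma mem_seg[simp]: "(t, c) \<in> set (seg a b) \<longleftrightarrow> \<not> c \<and> a \<le> t \<and> t < b" by (auto simp: seg_def)
lemma distinct_seg[simp]: "distinct (seg a b)" by (simp add: seg_def distinct_map inj_on_def)
lemma psum_seg: "psum f (seg a b) = (\<Sum>t\<in>{a..<b-1}. f (t, False) (Suc t, False))"
  unfolding seg_def by (rule psum_upt)

lemma sum_single:
  assumes "finite A" "t \<in> A" "\<And>u. u \<in> A \<Longrightarrow> u \<noteq> t \<Longrightarrow> g u = 0"
  shows "sum g A = (g t :: real)"
proof -
  have "sum g A = g t + sum g (A - {t})" by (rule sum.remove[OF assms(1,2)])
  moreover have "sum g (A - {t}) = 0" by (rule sum.neutral) (use assms(3) in simp)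
  ultimately show ?thesis by simp
qed

lemma sum_zero: "(\<And>u. u \<in> A \<Longrightarrow> g u = 0) \<Longrightarrow> sum g A = (0::real)"
  by simp

context JS
begin

definition V :: "(nat \<Rightarrow> nat) \<Rightarrow> (nat \<Rightarrow> nat) \<Rightarrow> nat \<times> bool \<Rightarrow> nat" where
  "V rr ss e = (if snd e then ss (fst e) else rr (fst e))"

definition selok :: "(nat \<Rightarrow> nat) \<Rightarrow> (nat \<Rightarrow> nat) \<Rightarrow> bool" where
  "selok rr ss \<longleftrightarrow> (\<forall>t\<le>p+1. rr t \<in> S t) \<and> (\<forall>t. 1 \<le> t \<and> t \<le> p \<longrightarrow> ss t \<in> S t \<and> ss t \<noteq> rr t)"

definition walkok :: "(nat \<times> bool) list \<Rightarrow> bool" where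
  "walkok ws \<longleftrightarrow> length ws = p + 1 \<and> hd ws = (0, False) \<and> last ws = (p + 1, False) \<and> distinct ws
     \<and> (\<forall>e\<in>set ws. fst e \<le> p + 1 \<and> (snd e \<longrightarrow> 1 \<le> fst e \<and> fst e \<le> p))"

lemma V_mem: "selok rr ss \<Longrightarrow> fst e \<le> p + 1 \<Longrightarrow> (snd e \<longrightarrow> 1 \<le> fst e \<and> fst e \<le> p) \<Longrightarrow> V rr ss e \<in> S (fst e)"
  unfolding selok_def V_def by auto

lemma V_inj: "selok rr ss \<Longrightarrow> walkok ws \<Longrightarrow> inj_on (V rr ss) (set ws)"
proof (rule inj_onI)
  fix e1 e2 assume a: "selok rr ss" "walkok ws" "e1 \<in> set ws" "e2 \<in> set ws" "V rr ss e1 = V rr ss e2"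
  have c1: "fst e1 \<le> p + 1 \<and> (snd e1 \<longrightarrow> 1 \<le> fst e1 \<and> fst e1 \<le> p)" using a(2,3) by (simp add: walkok_def)
  have c2: "fst e2 \<le> p + 1 \<and> (snd e2 \<longrightarrow> 1 \<le> fst e2 \<and> fst e2 \<le> p)" using a(2,4) by (simp add: walkok_def)
  have m1: "V rr ss e1 \<in> S (fst e1)" using V_mem[OF a(1)] c1 by blast
  have m2: "V rr ss e2 \<in> S (fst e2)" using V_mem[OF a(1)] c2 by blast
  have t: "fst e1 = fst e2" using S_same[OF m1 _ _ _] m2 a(5) c1 c2 by simp
  show "e1 = e2"
  proof (cases "snd e1 = snd e2")
    case True then show ?thesis using t by (simp add: prod_eq_iff)
  next
    case False
    then show ?thesis using a(1,5) t c1 c2 unfolding V_def selok_def by (cases "snd e1") auto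
  qed
qed

lemma walk_path:
  assumes sel: "selok rr ss" and W: "walkok ws"
  shows "is_pPath n p (map (V rr ss) ws)"
proof -
  let ?vs = "map (V rr ss) ws"
  have len: "length ?vs = p + 1" using W by (simp add: walkok_def)
  have ne: "ws \<noteq> []" using W by (auto simp: walkok_def)
  have dist: "distinct ?vs" using V_inj[OF sel W] W by (simp add: distinct_map walkok_def)
  have r0: "rr 0 = 0" using sel S0 unfolding selok_def by (metis le0 singletonD)
  have rn: "rr (p + 1) = n" using sel Sp1 unfolding selok_def by (metis le_refl singletonD)
  have hd0: "hd ?vs = 0" using W ne r0 by (simp add: walkok_def hd_map V_def)
  have lastn: "last ?vs = n" using W ne rn by (simp add: walkok_def last_map V_def)
  have le: "?vs!k \<le> n" if "k < p + 1" for k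
  proof -
    have "ws!k \<in> set ws" using that W by (simp add: walkok_def)
    then have "V rr ss (ws!k) \<in> S (fst (ws!k)) \<and> fst (ws!k) \<le> p + 1"
      using V_mem[OF sel] W by (auto simp: walkok_def)
    then show ?thesis using in_S_le that W by (simp add: walkok_def)
  qed
  have v0: "?vs!0 = 0" using hd0 len by (simp add: hd_conv_nth[symmetric] ne)
  have vp: "?vs!p = n" using lastn len ne by (simp add: last_conv_nth)
  have "(?vs!k, ?vs!Suc k) \<in> arcs n" if k: "k < p" for k
  proof -
    have ix: "i < length ?vs \<Longrightarrow> j < length ?vs \<Longrightarrow> ?vs!i = ?vs!j \<longleftrightarrow> i = j" for i j
      by (rule nth_eq_iff_index_eq[OF dist])
    have d1: "?vs!k \<noteq> ?vs!Suc k" using ix[of k "Suc k"] len k ne by simp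
    have d2: "?vs!Suc k \<noteq> 0" using ix[of "Suc k" 0] len k v0 ne by simp
    have d3: "?vs!k \<noteq> n" using ix[of k p] len k vp ne by simp
    have d4: "\<not> (?vs!k = 0 \<and> ?vs!Suc k = n)"
    proof
      assume h: "?vs!k = 0 \<and> ?vs!Suc k = n"
      then have "k = 0" using ix[of k 0] len k v0 ne by simp
      moreover have "Suc k = p" using h ix[of "Suc k" p] len k vp ne by simp
      ultimately show False using p4 by simp
    qed
    have l1: "?vs!k \<le> n" using le[of k] k by simp
    have l2: "?vs!Suc k \<le> n" using le[of "Suc k"] k by simp
    show ?thesis using d1 d2 d3 d4 l1 l2 unfolding arcs_def by simp
  qed
  then show ?thesis using len dist hd0 lastn by (simp add: is_pPath_def)
qed

lemma walk_ell:
  assumes sel: "selok rr ss" and W: "walkok ws"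
  shows "ell (map (V rr ss) ws) = psum (\<lambda>e f. Dl (fst e) (fst f)) ws"
proof -
  have "lay (V rr ss e) = fst e" if "e \<in> set ws" for e
    using V_mem[OF sel] W that lay_eq by (auto simp: walkok_def)
  then show ?thesis unfolding ell_def psum_map by (intro psum_cong) auto
qed

end

context JS
begin

definition rep :: "nat \<Rightarrow> nat" where
  "rep t = (if t = 0 then 0 else if t = p + 1 then n else (SOME v. v \<in> S t))"

lemma rep_mem: "t \<le> p + 1 \<Longrightarrow> rep t \<in> S t"
proof -
  assume t: "t \<le> p + 1"
  show ?thesis
  proof (cases "t = 0 \<or> t = p + 1")
    case True then show ?thesis using S0 Sp1 by (auto simp: rep_def)
  next
    case False
    have "S t \<noteq> {}" using S_ne t by simp
    then have "\<exists>v. v \<in> S t" by blast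
    then have "(SOME v. v \<in> S t) \<in> S t" by (rule someI_ex)
    then show ?thesis using False unfolding rep_def by simp
  qed
qed

lemma rep0[simp]: "rep 0 = 0" by (simp add: rep_def)
lemma repn[simp]: "rep (p + 1) = n" by (simp add: rep_def)

definition alt :: "nat \<Rightarrow> nat" where
  "alt t = (SOME v. v \<in> S t \<and> v \<noteq> rep t)"

lemma alt_mem: "1 \<le> t \<Longrightarrow> t \<le> p \<Longrightarrow> alt t \<in> S t \<and> alt t \<noteq> rep t"
proof -
  assume t: "1 \<le> t" "t \<le> p"
  then have "\<exists>u\<in>S t. u \<noteq> rep t" using two_elems rep_mem by simp
  then have "\<exists>u. u \<in> S t \<and> u \<noteq> rep t" by blast
  then show ?thesis unfolding alt_def by (rule someI_ex)
qed

lemma selok_rep: "selok rep alt"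
  unfolding selok_def using rep_mem alt_mem by simp

lemma selok_upd1:
  assumes "selok rr ss" "1 \<le> t" "t \<le> p" "x \<in> S t"
  shows "selok (rr(t := x)) (ss(t := if ss t = x then rr t else ss t))"
  using assms unfolding selok_def by auto

lemma selok_upd2:
  assumes "selok rr ss" "1 \<le> t" "t \<le> p" "x \<in> S t"
  shows "selok (rr(t := if rr t = x then ss t else rr t)) (ss(t := x))"
  using assms unfolding selok_def by auto

lemma selok_upd0:
  assumes "selok rr ss" "t \<le> p + 1" "x \<in> S t" "t = 0 \<or> t = p + 1"
  shows "selok (rr(t := x)) ss"
proof -
  have "rr t \<in> S t" using assms unfolding selok_def by simp
  then have "rr t = x" using assms S0 Sp1 by auto
  then have "rr(t := x) = rr" by auto
  then show ?thesis using assms by simp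
qed

lemma V_F[simp]: "V rr ss (t, False) = rr t" by (simp add: V_def)
lemma V_T[simp]: "V rr ss (t, True) = ss t" by (simp add: V_def)

end

locale JSW = JS +
  fixes w :: "nat \<times> nat \<Rightarrow> real" and K :: real
  assumes tight: "\<And>vs. is_pPath n p vs \<Longrightarrow> ell vs = 1 \<Longrightarrow> psum (\<lambda>a b. w (a, b)) vs = K"
begin

definition al :: real where "al = w (rep 1, alt 1) - w (0, alt 1) + w (0, rep 1)"

primrec pr :: "nat \<Rightarrow> real" where
  "pr 0 = 0"
| "pr (Suc t) = pr t + w (rep t, rep (Suc t)) - al"

definition pot :: "nat \<Rightarrow> real" where
  "pot v = (if lay v = 0 then 0 else pr (lay v - 1) + w (rep (lay v - 1), v) - al)"

definition be :: real where "be = w (0, rep 2) - pot (rep 2) - al"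

definition w2 :: "nat \<Rightarrow> nat \<Rightarrow> real" where
  "w2 x y = w (x, y) - pot y + pot x - al - be * Dl (lay x) (lay y)"

lemma pot0[simp]: "pot 0 = 0" by (simp add: pot_def)

lemma pot_rep: "t \<le> p + 1 \<Longrightarrow> pot (rep t) = pr t"
proof -
  assume t: "t \<le> p + 1"
  have l: "lay (rep t) = t" using lay_eq[OF rep_mem[OF t] t] .
  show ?thesis
  proof (cases t)
    case 0 then show ?thesis by simp
  next
    case (Suc u) then show ?thesis using l by (simp add: pot_def)
  qed
qed

lemma Dl_fwd: "Dl t (Suc t) = 0"
  using p4 unfolding Dl_def by auto

lemma tree: "t \<le> p \<Longrightarrow> v \<in> S (Suc t) \<Longrightarrow> w2 (rep t) v = 0"
proof -
  assume t: "t \<le> p" and v: "v \<in> S (Suc t)"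
  have lv: "lay v = Suc t" using lay_eq[OF v] t by simp
  have lr: "lay (rep t) = t" using lay_eq[OF rep_mem] t by simp
  have "pot v = pr t + w (rep t, v) - al" using lv by (simp add: pot_def)
  moreover have "pot (rep t) = pr t" using pot_rep t by simp
  ultimately show ?thesis unfolding w2_def using lv lr Dl_fwd by simp
qed

lemma w2_0_rep2: "w2 0 (rep 2) = 0"
proof -
  have "Dl 0 2 = 1" using p4 unfolding Dl_def by simp
  moreover have "lay (rep 2) = 2" using lay_eq[OF rep_mem] p4 by simp
  ultimately show ?thesis unfolding w2_def be_def by simp
qed

lemma w2_flat1: "w2 (rep 1) (alt 1) = 0"
proof -
  have a: "alt 1 \<in> S 1" using alt_mem p4 by simp
  have la: "lay (alt 1) = 1" using lay_eq[OF a] by simp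
  have lr: "lay (rep 1) = 1" using lay_eq[OF rep_mem] p4 by simp
  have "Dl 1 1 = 0" using p4 unfolding Dl_def by simp
  moreover have "pot (alt 1) = w (0, alt 1) - al" using la by (simp add: pot_def)
  moreover have "pot (rep 1) = w (0, rep 1) - al" using pot_rep[of 1] by simp
  ultimately show ?thesis unfolding w2_def al_def using la lr by simp
qed

lemma psum_w_split:
  assumes "vs \<noteq> []"
  shows "psum (\<lambda>a b. w (a, b)) vs = psum w2 vs + (pot (last vs) - pot (hd vs)) + al * (length vs - 1) + be * ell vs"
proof -
  have "psum (\<lambda>a b. w (a, b)) vs = psum (\<lambda>a b. (w2 a b + (pot b - pot a)) + (al + be * Dl (lay a) (lay b))) vs"
    by (intro psum_cong) (simp add: w2_def)
  also have "\<dots> = psum w2 vs + psum (\<lambda>a b. pot b - pot a) vs + (psum (\<lambda>a b. al) vs + be * psum (\<lambda>a b. Dl (lay a) (lay b)) vs)"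
    by (simp add: psum_add psum_cmult)
  also have "\<dots> = psum w2 vs + (pot (last vs) - pot (hd vs)) + al * (length vs - 1) + be * ell vs"
    using assms by (simp add: psum_tele psum_const ell_def)
  finally show ?thesis .
qed

lemma path_split: "is_pPath n p vs \<Longrightarrow> psum (\<lambda>a b. w (a, b)) vs = psum w2 vs + pot n + al * p + be * ell vs"
proof -
  assume P: "is_pPath n p vs"
  then have ne: "vs \<noteq> []" and l: "length vs = p + 1" and h: "hd vs = 0" and la: "last vs = n"
    by (auto simp: is_pPath_def)
  show ?thesis using psum_w_split[OF ne] l h la by simp
qed

definition W2 :: "(nat \<Rightarrow> nat) \<Rightarrow> (nat \<Rightarrow> nat) \<Rightarrow> nat \<times> bool \<Rightarrow> nat \<times> bool \<Rightarrow> real" where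
  "W2 rr ss e f = w2 (V rr ss e) (V rr ss f)"

definition DW :: "nat \<times> bool \<Rightarrow> nat \<times> bool \<Rightarrow> real" where
  "DW e f = Dl (fst e) (fst f)"

lemma DW_eq: "DW = (\<lambda>e f. Dl (fst e) (fst f))" by (simp add: fun_eq_iff DW_def)
lemma W2_eq: "W2 rr ss = (\<lambda>e f. w2 (V rr ss e) (V rr ss f))" by (simp add: fun_eq_iff W2_def)

lemma walk_tight_psum:
  assumes "selok rr ss" "walkok ws" "psum DW ws = 1"
  shows "psum w2 (map (V rr ss) ws) + pot n + al * p + be = K"
proof -
  let ?vs = "map (V rr ss) ws"
  have P: "is_pPath n p ?vs" by (rule walk_path[OF assms(1,2)])
  have e: "ell ?vs = 1" using walk_ell[OF assms(1,2)] assms(3) by (simp add: DW_eq)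
  show ?thesis using tight[OF P e] path_split[OF P] e by simp
qed

definition ws1 :: "(nat \<times> bool) list" where "ws1 = (0, False) # seg 2 (p + 2)"

lemma mem_seg': "e \<in> set (seg a b) \<longleftrightarrow> \<not> snd e \<and> a \<le> fst e \<and> fst e < b"
  by (cases e) simp

lemma ws1_ok: "walkok ws1"
  unfolding walkok_def ws1_def using p4 by (auto simp: mem_seg')

lemma ws1_Dl: "psum DW ws1 = 1"
proof -
  have "psum DW ws1 = DW (0, False) (2, False) + psum DW (seg 2 (p + 2))"
    unfolding ws1_def using p4 by (simp add: psum_Cons)
  also have "psum DW (seg 2 (p + 2)) = 0"
    unfolding psum_seg DW_def by (simp add: Dl_fwd)
  finally show ?thesis using p4 unfolding DW_def Dl_def by simp
qed

lemma ws1_w2: "psum w2 (map (V rep alt) ws1) = 0"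
proof -
  have "psum w2 (map (V rep alt) ws1) = psum (W2 rep alt) ws1"
    by (simp add: psum_map W2_eq)
  also have "\<dots> = W2 rep alt (0, False) (2, False) + psum (W2 rep alt) (seg 2 (p + 2))"
    unfolding ws1_def using p4 by (simp add: psum_Cons)
  also have "psum (W2 rep alt) (seg 2 (p + 2)) = 0"
    unfolding psum_seg W2_def using tree rep_mem by (intro sum_zero) simp
  finally show ?thesis using w2_0_rep2 by (simp add: W2_def)
qed

lemma C_zero: "pot n + al * p + be = K"
  using walk_tight_psum[OF selok_rep ws1_ok ws1_Dl] ws1_w2 by simp

lemma tight_zero:
  assumes "selok rr ss" "walkok ws" "psum DW ws = 1"
  shows "psum (W2 rr ss) ws = 0"
  using walk_tight_psum[OF assms] C_zero by (simp add: psum_map W2_eq)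

end

context JSW
begin

lemma Dl_fwd': "1 \<le> t \<Longrightarrow> Dl (t - 1) t = 0"
  using Dl_fwd[of "t - 1"] by simp

lemma DW_seg[simp]: "psum DW (seg a b) = 0"
  unfolding psum_seg DW_def by (simp add: Dl_fwd)

lemma W2_seg_zero:
  assumes "\<And>u. a \<le> u \<Longrightarrow> u < b - 1 \<Longrightarrow> w2 (rr u) (rr (Suc u)) = 0"
  shows "psum (W2 rr ss) (seg a b) = 0"
  unfolding psum_seg W2_def using assms by (intro sum_zero) simp

lemma W2_seg_tree:
  assumes "\<And>u. a \<le> u \<Longrightarrow> u < b - 1 \<Longrightarrow> rr u = rep u" "\<And>u. u \<le> p + 1 \<Longrightarrow> rr u \<in> S u" "b \<le> p + 2"
  shows "psum (W2 rr ss) (seg a b) = 0"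
proof (rule W2_seg_zero)
  fix u assume u: "a \<le> u" "u < b - 1"
  have su: "Suc u \<le> p + 1" using u assms(3) by auto
  have "rr u = rep u" using assms(1) u by simp
  moreover have "rr (Suc u) \<in> S (Suc u)" using assms(2)[OF su] .
  ultimately show "w2 (rr u) (rr (Suc u)) = 0" using tree[of u] su by simp
qed

lemma selok_mem: "selok rr ss \<Longrightarrow> u \<le> p + 1 \<Longrightarrow> rr u \<in> S u"
  unfolding selok_def by simp

lemma psum_app: "xs \<noteq> [] \<Longrightarrow> ys \<noteq> [] \<Longrightarrow> psum f (xs @ ys) = psum f xs + f (last xs) (hd ys) + psum f ys"
  by (rule psum_append)

lemma psum_single[simp]: "psum f [x] = 0" by simp

lemma A2: assumes t: "1 \<le> t" "t \<le> p" shows "w2 (rep (t - 1)) (rep (Suc t)) = 0"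
proof -
  define ws where "ws = seg 0 t @ seg (Suc t) (p + 2)"
  have W: "walkok ws" unfolding walkok_def ws_def using t by (auto simp: mem_seg')
  have ne: "seg 0 t \<noteq> []" "seg (Suc t) (p + 2) \<noteq> []" using t by auto
  have D: "psum DW ws = 1"
    unfolding ws_def psum_app[OF ne] using t p4 by (simp add: DW_def Dl_def; arith)
  have "psum (W2 rep alt) ws = w2 (rep (t - 1)) (rep (Suc t))"
    unfolding ws_def psum_app[OF ne] using t
    by (simp add: W2_seg_tree rep_mem W2_def)
  then show ?thesis using tight_zero[OF selok_rep W D] by simp
qed

lemma sel_set: assumes "selok rr ss" "t \<le> p + 1" "x \<in> S t" shows "\<exists>ss'. selok (rr(t := x)) ss'"
proof (cases "t = 0 \<or> t = p + 1")
  case True then show ?thesis using selok_upd0[OF assms] by blast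
next
  case False then show ?thesis using selok_upd1[OF assms(1) _ _ assms(3)] assms(2) by (intro exI) auto
qed

lemma W2_seg_one:
  assumes "a \<le> t" "t < b - 1" "\<And>u. a \<le> u \<Longrightarrow> u < b - 1 \<Longrightarrow> u \<noteq> t \<Longrightarrow> rr u = rep u"
    "\<And>u. u \<le> p + 1 \<Longrightarrow> rr u \<in> S u" "b \<le> p + 2"
  shows "psum (W2 rr ss) (seg a b) = w2 (rr t) (rr (Suc t))"
  unfolding psum_seg W2_def
proof (subst sum_single[where t = t])
  show "finite {a..<b - 1}" by simp
  show "t \<in> {a..<b - 1}" using assms by simp
  fix u assume u: "u \<in> {a..<b - 1}" "u \<noteq> t"
  have su: "Suc u \<le> p + 1" using u assms(5) by auto
  have "rr u = rep u" using assms(3) u by simp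
  moreover have "rr (Suc u) \<in> S (Suc u)" using assms(4)[OF su] .
  ultimately show "w2 (V rr ss (u, False)) (V rr ss (Suc u, False)) = 0" using tree[of u] su by simp
qed simp

definition Z :: "nat \<Rightarrow> nat \<Rightarrow> bool" where
  "Z a b \<longleftrightarrow> (\<forall>x\<in>S a. \<forall>y\<in>S b. x \<noteq> y \<longrightarrow> w2 x y = 0)"

lemma A3: assumes t: "1 \<le> t" "t \<le> p" and v: "v \<in> S t" shows "w2 v (rep (Suc t)) = 0"
proof -
  have tp: "t \<le> p + 1" using t by simp
  obtain ss where sel: "selok (rep(t := v)) ss" using sel_set[OF selok_rep tp v] by blast
  have mem: "\<And>u. u \<le> p + 1 \<Longrightarrow> (rep(t := v)) u \<in> S u" using selok_mem[OF sel] by blast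
  show ?thesis
  proof (cases "3 \<le> t")
    case True
    define ws where "ws = [(0, False)] @ seg 2 (p + 2)"
    have W: "walkok ws" unfolding walkok_def ws_def using t p4 by (auto simp: mem_seg')
    have ne: "[(0, False)] \<noteq> []" "seg 2 (p + 2) \<noteq> []" using p4 by auto
    have D: "psum DW ws = 1"
      unfolding ws_def psum_app[OF ne] using p4 by (simp add: DW_def Dl_def)
    have "psum (W2 (rep(t := v)) ss) ws = w2 0 (rep 2) + w2 v (rep (Suc t))"
      unfolding ws_def psum_app[OF ne] using t True
      by (subst W2_seg_one[where t = t]) (auto simp: mem W2_def v rep_mem)
    then show ?thesis using tight_zero[OF sel W D] w2_0_rep2 by simp
  next
    case False
    define ws where "ws = seg 0 p @ [(p + 1, False)]"
    have W: "walkok ws" unfolding walkok_def ws_def using t p4 by (auto simp: mem_seg')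
    have ne: "seg 0 p \<noteq> []" "[(p + 1, False)] \<noteq> []" using p4 by auto
    have D: "psum DW ws = 1"
      unfolding ws_def psum_app[OF ne] using p4 by (simp add: DW_def Dl_def)
    have "psum (W2 (rep(t := v)) ss) ws = w2 v (rep (Suc t)) + w2 (rep (p - 1)) (rep (Suc p))"
      unfolding ws_def psum_app[OF ne] using t False p4
      by (subst W2_seg_one[where t = t]) (auto simp: mem W2_def v rep_mem)
    then show ?thesis using tight_zero[OF sel W D] A2[of p] p4 by simp
  qed
qed

lemma A4: assumes t: "2 \<le> t" "t \<le> p" and v: "v \<in> S t" shows "w2 (rep (t - 2)) v = 0"
proof -
  have tp: "t \<le> p + 1" using t by simp
  obtain ss where sel: "selok (rep(t := v)) ss" using sel_set[OF selok_rep tp v] by blast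
  have mem: "\<And>u. u \<le> p + 1 \<Longrightarrow> (rep(t := v)) u \<in> S u" using selok_mem[OF sel] by blast
  define ws where "ws = seg 0 (t - 1) @ seg t (p + 2)"
  have W: "walkok ws" unfolding walkok_def ws_def using t p4 by (auto simp: mem_seg')
  have ne: "seg 0 (t - 1) \<noteq> []" "seg t (p + 2) \<noteq> []" using t by auto
  have D: "psum DW ws = 1"
    unfolding ws_def psum_app[OF ne] using t p4 by (simp add: DW_def Dl_def; arith)
  have "psum (W2 (rep(t := v)) ss) ws = w2 (rep (t - 2)) v + w2 v (rep (Suc t))"
  proof -
    have "psum (W2 (rep(t := v)) ss) (seg 0 (t - 1)) = 0"
      using t by (intro W2_seg_tree) (auto simp: mem v rep_mem)
    moreover have "psum (W2 (rep(t := v)) ss) (seg t (p + 2)) = w2 v (rep (Suc t))"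
      using t by (subst W2_seg_one[where t = t]) (auto simp: mem v rep_mem)
    moreover have "t - 1 - 1 = t - 2" by simp
    moreover have "t - 2 \<noteq> t" using t by simp
    ultimately show ?thesis unfolding ws_def psum_app[OF ne] using t by (simp add: W2_def)
  qed
  then show ?thesis using tight_zero[OF sel W D] A3[OF _ t(2) v] t by simp
qed

lemma A5: assumes t: "1 \<le> t" "t \<le> p - 1" and v: "v \<in> S t" shows "w2 v (rep (t + 2)) = 0"
proof -
  have tp: "t \<le> p + 1" using t by simp
  obtain ss where sel: "selok (rep(t := v)) ss" using sel_set[OF selok_rep tp v] by blast
  have mem: "\<And>u. u \<le> p + 1 \<Longrightarrow> (rep(t := v)) u \<in> S u" using selok_mem[OF sel] by blast
  define ws where "ws = seg 0 (t + 1) @ seg (t + 2) (p + 2)"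
  have W: "walkok ws" unfolding walkok_def ws_def using t p4 by (auto simp: mem_seg')
  have ne: "seg 0 (t + 1) \<noteq> []" "seg (t + 2) (p + 2) \<noteq> []" using t p4 by auto
  have D: "psum DW ws = 1"
    unfolding ws_def psum_app[OF ne] using t p4 by (simp add: DW_def Dl_def; arith)
  have "psum (W2 (rep(t := v)) ss) ws = w2 v (rep (t + 2))"
  proof -
    have "psum (W2 (rep(t := v)) ss) (seg 0 (t + 1)) = 0"
      using t by (intro W2_seg_tree) (auto simp: mem v rep_mem)
    moreover have "psum (W2 (rep(t := v)) ss) (seg (t + 2) (p + 2)) = 0"
      using t by (intro W2_seg_tree) (auto simp: mem v rep_mem)
    ultimately show ?thesis unfolding ws_def psum_app[OF ne] using t by (simp add: W2_def)
  qed
  then show ?thesis using tight_zero[OF sel W D] by simp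
qed

lemma sel_set2:
  assumes "a \<le> p + 1" "x \<in> S a" "b \<le> p + 1" "y \<in> S b"
  obtains ss where "selok (rep(a := x, b := y)) ss"
proof -
  obtain s1 where "selok (rep(a := x)) s1" using sel_set[OF selok_rep assms(1,2)] by blast
  then obtain s2 where "selok (rep(a := x, b := y)) s2" using sel_set[OF _ assms(3,4)] by blast
  then show ?thesis using that by blast
qed

lemma A6: assumes t: "t \<le> p" shows "Z t (Suc t)"
  unfolding Z_def
proof (intro ballI impI)
  fix x y assume x: "x \<in> S t" and y: "y \<in> S (Suc t)" and xy: "x \<noteq> y"
  let ?rr = "rep(t := x, Suc t := y)"
  obtain ss where sel: "selok ?rr ss" using sel_set2[of t x "Suc t" y] t x y by auto
  have mem: "\<And>u. u \<le> p + 1 \<Longrightarrow> ?rr u \<in> S u" using selok_mem[OF sel] by blast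
  show "w2 x y = 0"
  proof (cases "2 \<le> t")
    case True
    define ws where "ws = seg 0 (t - 1) @ [(t, False)] @ seg (Suc t) (p + 2)"
    have W: "walkok ws" unfolding walkok_def ws_def using t True p4 by (auto simp: mem_seg')
    have ne: "seg 0 (t - 1) \<noteq> []" "[(t, False)] @ seg (Suc t) (p + 2) \<noteq> []"
      "[(t, False)] \<noteq> []" "seg (Suc t) (p + 2) \<noteq> []" using t True by auto
    have D: "psum DW ws = 1"
      unfolding ws_def psum_app[OF ne(1,2)] psum_app[OF ne(3,4)] using t True p4 by (simp add: DW_def Dl_def; arith)
    have s1: "psum (W2 ?rr ss) (seg 0 (t - 1)) = 0"
      using t True by (intro W2_seg_tree) (auto simp: mem x y rep_mem)
    have s2: "psum (W2 ?rr ss) (seg (Suc t) (p + 2)) = 0"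
    proof (rule W2_seg_zero)
      fix u assume u: "Suc t \<le> u" "u < p + 2 - 1"
      show "w2 (?rr u) (?rr (Suc u)) = 0"
      proof (cases "u = Suc t")
        case True
        then show ?thesis using A3[of "Suc t" y] y u by simp
      next
        case False
        then have "?rr u = rep u" using u by simp
        then show ?thesis using tree[of u "?rr (Suc u)"] mem[of "Suc u"] u by simp
      qed
    qed
    have e: "t - 1 - 1 = t - 2" "t - 2 \<noteq> t" "t - 2 \<noteq> Suc t" using True by auto
    have "psum (W2 ?rr ss) ws = w2 (rep (t - 2)) x + w2 x y"
      unfolding ws_def psum_app[OF ne(1,2)] psum_app[OF ne(3,4)] using s1 s2 t True e
      by (simp add: W2_def)
    then show ?thesis using tight_zero[OF sel W D] A4[OF True t x] by simp
  next
    case False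
    define ws where "ws = seg 0 (t + 2) @ seg (t + 3) (p + 2)"
    have W: "walkok ws" unfolding walkok_def ws_def using t False p4 by (auto simp: mem_seg')
    have ne: "seg 0 (t + 2) \<noteq> []" "seg (t + 3) (p + 2) \<noteq> []" using t False p4 by auto
    have D: "psum DW ws = 1"
      unfolding ws_def psum_app[OF ne] using t False p4 by (simp add: DW_def Dl_def; arith)
    have s1: "psum (W2 ?rr ss) (seg 0 (t + 2)) = w2 x y"
      using t False by (subst W2_seg_one[where t = t]) (auto simp: mem x y rep_mem)
    have s2: "psum (W2 ?rr ss) (seg (t + 3) (p + 2)) = 0"
      using t False by (intro W2_seg_tree) (auto simp: mem x y rep_mem)
    have "psum (W2 ?rr ss) ws = w2 x y + w2 y (rep (t + 3))"
      unfolding ws_def psum_app[OF ne] using s1 s2 t False p4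
      by (simp add: W2_def)
    moreover have "w2 y (rep (t + 3)) = 0"
    proof -
      have e3: "Suc t + 2 = t + 3" by simp
      have "w2 y (rep (Suc t + 2)) = 0" using A5[of "Suc t" y] y t False p4 by simp
      then show ?thesis unfolding e3 .
    qed
    ultimately show ?thesis using tight_zero[OF sel W D] by simp
  qed
qed

lemma A7: assumes t: "t + 2 \<le> p + 1" shows "Z t (t + 2)"
  unfolding Z_def
proof (intro ballI impI)
  fix x y assume x: "x \<in> S t" and y: "y \<in> S (t + 2)" and xy: "x \<noteq> y"
  have y': "y \<in> S (Suc (Suc t))" using y by simp
  let ?rr = "rep(t := x, t + 2 := y)"
  obtain ss where sel: "selok ?rr ss" using sel_set2[of t x "t + 2" y] t x y by auto
  have mem: "\<And>u. u \<le> p + 1 \<Longrightarrow> ?rr u \<in> S u" using selok_mem[OF sel] by blast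
  define ws where "ws = seg 0 (t + 1) @ seg (t + 2) (p + 2)"
  have W: "walkok ws" unfolding walkok_def ws_def using t p4 by (auto simp: mem_seg')
  have ne: "seg 0 (t + 1) \<noteq> []" "seg (t + 2) (p + 2) \<noteq> []" using t by auto
  have D: "psum DW ws = 1"
    unfolding ws_def psum_app[OF ne] using t p4 by (simp add: DW_def Dl_def; arith)
  have s1: "psum (W2 ?rr ss) (seg 0 (t + 1)) = 0"
    using t by (intro W2_seg_tree) (auto simp: mem x y y' rep_mem)
  have s2: "psum (W2 ?rr ss) (seg (t + 2) (p + 2)) = 0"
  proof (rule W2_seg_zero)
    fix u assume u: "t + 2 \<le> u" "u < p + 2 - 1"
    show "w2 (?rr u) (?rr (Suc u)) = 0"
    proof (cases "u = t + 2")
      case True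
      then show ?thesis using A3[of "t + 2" y] y u by simp
    next
      case False
      then have "?rr u = rep u" using u by simp
      then show ?thesis using tree[of u "?rr (Suc u)"] mem[of "Suc u"] u by simp
    qed
  qed
  have "psum (W2 ?rr ss) ws = w2 x y"
    unfolding ws_def psum_app[OF ne] using s1 s2 t by (simp add: W2_def)
  then show "w2 x y = 0" using tight_zero[OF sel W D] by simp
qed

end

context JSW
begin

definition oth :: "nat \<Rightarrow> nat \<Rightarrow> nat" where
  "oth t v = (if v = rep t then alt t else rep t)"

lemma oth_mem: "1 \<le> t \<Longrightarrow> t \<le> p \<Longrightarrow> v \<in> S t \<Longrightarrow> oth t v \<in> S t \<and> oth t v \<noteq> v"
  unfolding oth_def using alt_mem rep_mem by auto

lemma Zw: "Z a b \<Longrightarrow> x \<in> S a \<Longrightarrow> y \<in> S b \<Longrightarrow> x \<noteq> y \<Longrightarrow> w2 x y = 0"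
  unfolding Z_def by blast

lemma S_neq: "x \<in> S a \<Longrightarrow> y \<in> S b \<Longrightarrow> a \<noteq> b \<Longrightarrow> a \<le> p + 1 \<Longrightarrow> b \<le> p + 1 \<Longrightarrow> x \<noteq> y"
  using S_same by blast

lemma Zl: "Z a b \<Longrightarrow> x \<in> S a \<Longrightarrow> y \<in> S b \<Longrightarrow> a \<noteq> b \<Longrightarrow> a \<le> p + 1 \<Longrightarrow> b \<le> p + 1 \<Longrightarrow> w2 x y = 0"
  using Zw S_neq by blast

lemma seg_fwd: "selok rr ss \<Longrightarrow> b \<le> p + 2 \<Longrightarrow> psum (W2 rr ss) (seg a b) = 0"
proof (rule W2_seg_zero)
  fix u assume sel: "selok rr ss" and b: "b \<le> p + 2" and u: "a \<le> u" "u < b - 1"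
  have up: "u \<le> p" using u b by simp
  show "w2 (rr u) (rr (Suc u)) = 0"
    using Zl[OF A6[OF up] selok_mem[OF sel] selok_mem[OF sel]] up by simp
qed

lemma Zfw: "t \<le> p \<Longrightarrow> b = t + 1 \<Longrightarrow> x \<in> S t \<Longrightarrow> y \<in> S b \<Longrightarrow> w2 x y = 0"
  using Zl[OF A6[of t], of x y] by simp

lemma Z01: "x \<in> S 1 \<Longrightarrow> w2 0 x = 0"
  using Zl[OF A6[of 0], of 0 x] S0 p4 by simp

lemma seln: "selok rr ss \<Longrightarrow> rr (p + 1) = n"
  using selok_mem[of rr ss "p + 1"] Sp1 by simp
lemma sel0: "selok rr ss \<Longrightarrow> rr 0 = 0"
  using selok_mem[of rr ss 0] S0 by simp

lemma B1: assumes u: "2 \<le> u" "u + 3 \<le> p + 1" shows "Z u (u + 3)"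
  unfolding Z_def
proof (intro ballI impI)
  fix x y assume x: "x \<in> S u" and y: "y \<in> S (u + 3)" and xy: "x \<noteq> y"
  let ?rr = "rep(u := x, u + 3 := y)" and ?ss = "alt(u := oth u x, u + 3 := oth (u + 3) y)"
  have sel: "selok ?rr ?ss" unfolding selok_def
    using u x y rep_mem alt_mem oth_mem[of u x] oth_mem[of "u + 3" y] by auto
  define ws where "ws = [(0, False), (1, False), (1, True)] @ seg 2 (u + 1) @ seg (u + 3) (p + 2)"
  have W: "walkok ws" unfolding walkok_def ws_def using u p4 by (auto simp: mem_seg')
  have ne: "[(0, False), (1, False), (1, True)] \<noteq> []" "seg 2 (u + 1) @ seg (u + 3) (p + 2) \<noteq> []"
     "seg 2 (u + 1) \<noteq> []" "seg (u + 3) (p + 2) \<noteq> []" using u by auto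
  have D: "psum DW ws = 1"
    unfolding ws_def psum_app[OF ne(1,2)] psum_app[OF ne(3,4)] using u p4 by (simp add: DW_def Dl_def; arith)
  have "psum (W2 ?rr ?ss) ws = w2 0 (rep 1) + w2 (rep 1) (alt 1) + w2 (alt 1) (?rr 2) + w2 x y"
    unfolding ws_def psum_app[OF ne(1,2)] psum_app[OF ne(3,4)] using u seg_fwd[OF sel]
    by (simp add: W2_def)
  moreover have "w2 0 (rep 1) = 0" using Z01 rep_mem p4 by simp
  moreover have "w2 (alt 1) (?rr 2) = 0"
  proof (rule Zfw[of 1 2])
    show "?rr 2 \<in> S 2" using selok_mem[OF sel, of 2] p4 by simp
  qed (use alt_mem p4 in simp_all)
  ultimately show "w2 x y = 0" using tight_zero[OF sel W D] w2_flat1 by simp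
qed

lemma B1': assumes y: "y \<in> S 4" shows "w2 (alt 1) y = 0"
proof -
  let ?rr = "rep(4 := y)" and ?ss = "alt(4 := oth 4 y)"
  have sel: "selok ?rr ?ss" unfolding selok_def
    using p4 y rep_mem alt_mem oth_mem[of 4 y] by auto
  define ws where "ws = [(0, False), (1, False), (1, True), (4, False)] @ seg 5 (p + 2)"
  have W: "walkok ws" unfolding walkok_def ws_def using p4 by (auto simp: mem_seg')
  have ne: "[(0, False), (1, False), (1, True), (4, False)] \<noteq> []" "seg 5 (p + 2) \<noteq> []" using p4 by auto
  have D: "psum DW ws = 1"
    unfolding ws_def psum_app[OF ne] using p4 by (simp add: DW_def Dl_def; arith)
  have "psum (W2 ?rr ?ss) ws = w2 0 (rep 1) + w2 (rep 1) (alt 1) + w2 (alt 1) y + w2 y (rep 5)"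
    unfolding ws_def psum_app[OF ne] using seg_fwd[OF sel] p4
    by (simp add: W2_def)
  moreover have "w2 0 (rep 1) = 0" using Z01 rep_mem p4 by simp
  moreover have "w2 y (rep 5) = 0" by (rule Zfw[of 4 5]) (use y rep_mem p4 in simp_all)
  ultimately show ?thesis using tight_zero[OF sel W D] w2_flat1 by simp
qed

lemma B2: "Z 4 4"
  unfolding Z_def
proof (intro ballI impI)
  fix x y assume x: "x \<in> S 4" and y: "y \<in> S 4" and xy: "x \<noteq> y"
  let ?rr = "rep(4 := x)" and ?ss = "alt(4 := y)"
  have sel: "selok ?rr ?ss" unfolding selok_def
    using p4 x y xy rep_mem alt_mem by auto
  define ws where "ws = [(0, False), (1, True), (4, False), (4, True)] @ seg 5 (p + 2)"
  have W: "walkok ws" unfolding walkok_def ws_def using p4 by (auto simp: mem_seg')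
  have ne: "[(0, False), (1, True), (4, False), (4, True)] \<noteq> []" "seg 5 (p + 2) \<noteq> []" using p4 by auto
  have D: "psum DW ws = 1"
    unfolding ws_def psum_app[OF ne] using p4 by (simp add: DW_def Dl_def; arith)
  have "psum (W2 ?rr ?ss) ws = w2 0 (alt 1) + w2 (alt 1) x + w2 x y + w2 y (rep 5)"
    unfolding ws_def psum_app[OF ne] using seg_fwd[OF sel] p4
    by (simp add: W2_def)
  moreover have "w2 0 (alt 1) = 0" using Z01 alt_mem p4 by simp
  moreover have "w2 (alt 1) x = 0" using B1' x by simp
  moreover have "w2 y (rep 5) = 0" by (rule Zfw[of 4 5]) (use y rep_mem p4 in simp_all)
  ultimately show "w2 x y = 0" using tight_zero[OF sel W D] by simp
qed

lemma B5: "Z 0 3"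
  unfolding Z_def
proof (intro ballI impI)
  fix x y assume x: "x \<in> S 0" and y: "y \<in> S 3" and xy: "x \<noteq> y"
  have x0: "x = 0" using x S0 by simp
  let ?rr = "rep(3 := y)" and ?ss = "alt(3 := oth 3 y)"
  have sel: "selok ?rr ?ss" unfolding selok_def
    using p4 y rep_mem alt_mem oth_mem[of 3 y] by auto
  define ws where "ws = [(0, False), (3, False), (4, False), (4, True)] @ seg 5 (p + 2)"
  have W: "walkok ws" unfolding walkok_def ws_def using p4 by (auto simp: mem_seg')
  have ne: "[(0, False), (3, False), (4, False), (4, True)] \<noteq> []" "seg 5 (p + 2) \<noteq> []" using p4 by auto
  have D: "psum DW ws = 1"
    unfolding ws_def psum_app[OF ne] using p4 by (simp add: DW_def Dl_def; arith)
  have "psum (W2 ?rr ?ss) ws = w2 0 y + w2 y (rep 4) + w2 (rep 4) (alt 4) + w2 (alt 4) (rep 5)"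
    unfolding ws_def psum_app[OF ne] using seg_fwd[OF sel] p4
    by (simp add: W2_def)
  moreover have "w2 y (rep 4) = 0" by (rule Zfw[of 3 4]) (use y rep_mem p4 in simp_all)
  moreover have "w2 (rep 4) (alt 4) = 0" using Zw[OF B2, of "rep 4" "alt 4"] rep_mem[of 4] alt_mem[of 4] p4 by simp
  moreover have "w2 (alt 4) (rep 5) = 0" by (rule Zfw[of 4 5]) (use alt_mem rep_mem p4 in simp_all)
  ultimately show "w2 x y = 0" using tight_zero[OF sel W D] x0 by simp
qed

lemma B6: assumes t: "3 \<le> t" "t \<le> p" shows "Z t t"
  unfolding Z_def
proof (intro ballI impI)
  fix x y assume x: "x \<in> S t" and y: "y \<in> S t" and xy: "x \<noteq> y"
  let ?rr = "rep(t := x)" and ?ss = "alt(t := y)"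
  have sel: "selok ?rr ?ss" unfolding selok_def
    using t x y xy rep_mem alt_mem by auto
  define ws where "ws = [(0, False)] @ seg 3 (t + 1) @ [(t, True)] @ seg (t + 1) (p + 2)"
  have W: "walkok ws" unfolding walkok_def ws_def using t p4 by (auto simp: mem_seg')
  have ne: "[(0, False)] \<noteq> []" "seg 3 (t + 1) @ [(t, True)] @ seg (t + 1) (p + 2) \<noteq> []"
     "seg 3 (t + 1) \<noteq> []" "[(t, True)] @ seg (t + 1) (p + 2) \<noteq> []"
     "[(t, True)] \<noteq> []" "seg (t + 1) (p + 2) \<noteq> []" using t by auto
  have D: "psum DW ws = 1"
    unfolding ws_def psum_app[OF ne(1,2)] psum_app[OF ne(3,4)] psum_app[OF ne(5,6)]
    using t p4 by (simp add: DW_def Dl_def; arith)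
  have "psum (W2 ?rr ?ss) ws = w2 0 (?rr 3) + w2 x y + w2 y (rep (t + 1))"
    unfolding ws_def psum_app[OF ne(1,2)] psum_app[OF ne(3,4)] psum_app[OF ne(5,6)]
    using t seg_fwd[OF sel] by (simp add: W2_def)
  moreover have "w2 0 (?rr 3) = 0" using Zl[OF B5, of 0 "?rr 3"] S0 selok_mem[OF sel, of 3] p4 by simp
  moreover have "w2 y (rep (t + 1)) = 0" by (rule Zfw[of t]) (use t y rep_mem[of "t + 1"] in simp_all)
  ultimately show "w2 x y = 0" using tight_zero[OF sel W D] by simp
qed

lemma B3: assumes t: "1 \<le> t" "t \<le> 2" shows "Z t t"
  unfolding Z_def
proof (intro ballI impI)
  fix x y assume x: "x \<in> S t" and y: "y \<in> S t" and xy: "x \<noteq> y"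
  let ?rr = "rep(t := x)" and ?ss = "alt(t := y)"
  have sel: "selok ?rr ?ss" unfolding selok_def
    using t p4 x y xy rep_mem alt_mem by auto
  have Z25: "Z 2 5" using B1[of 2] p4 by simp
  show "w2 x y = 0"
  proof (cases "t = 1")
    case True
    define ws where "ws = [(0, False), (1, False), (1, True), (2, False)] @ seg 5 (p + 2)"
    have W: "walkok ws" unfolding walkok_def ws_def using p4 by (auto simp: mem_seg')
    have ne: "[(0, False), (1, False), (1, True), (2, False)] \<noteq> []" "seg 5 (p + 2) \<noteq> []" using p4 by auto
    have D: "psum DW ws = 1"
      unfolding ws_def psum_app[OF ne] using p4 by (simp add: DW_def Dl_def; arith)
    have "psum (W2 ?rr ?ss) ws = w2 0 x + w2 x y + w2 y (rep 2) + w2 (rep 2) (rep 5)"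
      unfolding ws_def psum_app[OF ne] using True seg_fwd[OF sel] p4 by (simp add: W2_def)
    moreover have "w2 0 x = 0" using Z01 x True by simp
    moreover have "w2 y (rep 2) = 0" by (rule Zfw[of 1 2]) (use y True rep_mem p4 in simp_all)
    moreover have "w2 (rep 2) (rep 5) = 0" using Zl[OF Z25, of "rep 2" "rep 5"] rep_mem p4 by simp
    ultimately show ?thesis using tight_zero[OF sel W D] by simp
  next
    case False
    then have t2: "t = 2" using t by simp
    define ws where "ws = [(0, False), (1, False), (2, False), (2, True)] @ seg 5 (p + 2)"
    have W: "walkok ws" unfolding walkok_def ws_def using p4 by (auto simp: mem_seg')
    have ne: "[(0, False), (1, False), (2, False), (2, True)] \<noteq> []" "seg 5 (p + 2) \<noteq> []" using p4 by auto
    have D: "psum DW ws = 1"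
      unfolding ws_def psum_app[OF ne] using p4 by (simp add: DW_def Dl_def; arith)
    have "psum (W2 ?rr ?ss) ws = w2 0 (rep 1) + w2 (rep 1) x + w2 x y + w2 y (rep 5)"
      unfolding ws_def psum_app[OF ne] using t2 seg_fwd[OF sel] p4 by (simp add: W2_def)
    moreover have "w2 0 (rep 1) = 0" using Z01 rep_mem p4 by simp
    moreover have "w2 (rep 1) x = 0" by (rule Zfw[of 1 2]) (use x t2 rep_mem p4 in simp_all)
    moreover have "w2 y (rep 5) = 0" using Zl[OF Z25, of y "rep 5"] y t2 rep_mem p4 by simp
    ultimately show ?thesis using tight_zero[OF sel W D] by simp
  qed
qed

lemma B4: "Z 1 4"
  unfolding Z_def
proof (intro ballI impI)
  fix x y assume x: "x \<in> S 1" and y: "y \<in> S 4" and xy: "x \<noteq> y"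
  let ?rr = "rep(1 := x, 4 := y)" and ?ss = "alt(1 := oth 1 x, 4 := oth 4 y)"
  have sel: "selok ?rr ?ss" unfolding selok_def
    using p4 x y rep_mem alt_mem oth_mem[of 1 x] oth_mem[of 4 y] by auto
  define ws where "ws = [(0, False), (1, False), (4, False), (4, True)] @ seg 5 (p + 2)"
  have W: "walkok ws" unfolding walkok_def ws_def using p4 by (auto simp: mem_seg')
  have ne: "[(0, False), (1, False), (4, False), (4, True)] \<noteq> []" "seg 5 (p + 2) \<noteq> []" using p4 by auto
  have D: "psum DW ws = 1"
    unfolding ws_def psum_app[OF ne] using p4 by (simp add: DW_def Dl_def; arith)
  have "psum (W2 ?rr ?ss) ws = w2 0 x + w2 x y + w2 y (oth 4 y) + w2 (oth 4 y) (rep 5)"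
    unfolding ws_def psum_app[OF ne] using seg_fwd[OF sel] p4 by (simp add: W2_def)
  moreover have "w2 0 x = 0" using Z01 x by simp
  moreover have "w2 y (oth 4 y) = 0" using Zw[OF B2, of y "oth 4 y"] y oth_mem[of 4 y] p4 by simp
  moreover have "w2 (oth 4 y) (rep 5) = 0" by (rule Zfw[of 4 5]) (use y oth_mem[of 4 y] rep_mem p4 in simp_all)
  ultimately show "w2 x y = 0" using tight_zero[OF sel W D] by simp
qed

lemma Zflat: "1 \<le> t \<Longrightarrow> t \<le> p \<Longrightarrow> Z t t"
  using B3 B6 by (cases "t \<le> 2") auto

lemma Z3: "t + 3 \<le> p + 1 \<Longrightarrow> Z t (t + 3)"
proof -
  assume t: "t + 3 \<le> p + 1"
  consider "t = 0" | "t = 1" | "2 \<le> t" by linarith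
  then show ?thesis
  proof cases
    case 1 then show ?thesis using B5 by simp
  next
    case 2 then show ?thesis using B4 by simp
  next
    case 3 then show ?thesis using B1 t by simp
  qed
qed

lemma Z1: "t \<le> p \<Longrightarrow> Z t (t + 1)" using A6 by simp
lemma Z2: "t + 2 \<le> p + 1 \<Longrightarrow> Z t (t + 2)" using A7 by simp

end

context JSW
begin

lemma Zback: "Z b a \<Longrightarrow> x \<in> S b \<Longrightarrow> y \<in> S a \<Longrightarrow> a \<noteq> b \<Longrightarrow> a \<le> p + 1 \<Longrightarrow> b \<le> p + 1 \<Longrightarrow> w2 x y = 0"
  using Zl by blast

lemma R2: assumes ab: "a + 5 \<le> b" "b \<le> p" and Zj: "Z (a + 1) b" shows "Z b (a + 4)"
  unfolding Z_def
proof (intro ballI impI)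
  fix x y assume x: "x \<in> S b" and y: "y \<in> S (a + 4)" and xy: "x \<noteq> y"
  let ?rr = "rep(b := x, a + 4 := y)" and ?ss = "alt(b := oth b x, a + 4 := oth (a + 4) y)"
  have sel: "selok ?rr ?ss" unfolding selok_def
    using ab x y rep_mem alt_mem oth_mem[of b x] oth_mem[of "a + 4" y] by auto
  define ws where "ws = seg 0 (a + 2) @ [(b, False)] @ seg (a + 4) b @ [(b, True)] @ seg (b + 1) (p + 2)"
  have W: "walkok ws" unfolding walkok_def ws_def using ab p4 by (auto simp: mem_seg')
  have D: "psum DW ws = 1"
    unfolding ws_def using ab p4 by (simp add: psum_app psum_Cons DW_def Dl_def; arith)
  have "psum (W2 ?rr ?ss) ws = w2 (rep (a + 1)) x + w2 x y + w2 (?rr (b - 1)) (oth b x) + w2 (oth b x) (?rr (b + 1))"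
    unfolding ws_def using ab seg_fwd[OF sel] by (simp add: psum_app psum_Cons W2_def)
  moreover have "w2 (rep (a + 1)) x = 0" using Zl[OF Zj, of "rep (a + 1)" x] rep_mem[of "a + 1"] x ab by simp
  moreover have "w2 (?rr (b - 1)) (oth b x) = 0"
    by (rule Zfw[of "b - 1" b]) (use ab selok_mem[OF sel, of "b - 1"] oth_mem[of b x] x in simp_all)
  moreover have "w2 (oth b x) (?rr (b + 1)) = 0"
    by (rule Zfw[of b "b + 1"]) (use ab selok_mem[OF sel, of "b + 1"] oth_mem[of b x] x in simp_all)
  ultimately show "w2 x y = 0" using tight_zero[OF sel W D] by simp
qed

lemma selok_ss: "selok rr ss \<Longrightarrow> 1 \<le> t \<Longrightarrow> t \<le> p \<Longrightarrow> ss t \<in> S t \<and> ss t \<noteq> rr t"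
  unfolding selok_def by simp

lemma Zflat_w: "1 \<le> t \<Longrightarrow> t \<le> p \<Longrightarrow> x \<in> S t \<Longrightarrow> y \<in> S t \<Longrightarrow> x \<noteq> y \<Longrightarrow> w2 x y = 0"
  using Zw[OF Zflat] by blast

lemma sel_flat: "selok rr ss \<Longrightarrow> 1 \<le> t \<Longrightarrow> t \<le> p \<Longrightarrow> w2 (rr t) (ss t) = 0"
  using Zflat_w[of t "rr t" "ss t"] selok_mem[of rr ss t] selok_ss[of rr ss t] by simp
lemma sel_flat': "selok rr ss \<Longrightarrow> 1 \<le> t \<Longrightarrow> t \<le> p \<Longrightarrow> w2 (ss t) (rr t) = 0"
  using Zflat_w[of t "ss t" "rr t"] selok_mem[of rr ss t] selok_ss[of rr ss t] by simp
lemma sel_fw_sr: "selok rr ss \<Longrightarrow> 1 \<le> t \<Longrightarrow> t \<le> p \<Longrightarrow> w2 (ss t) (rr (t + 1)) = 0"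
  using Zfw[of t "t + 1" "ss t" "rr (t + 1)"] selok_mem[of rr ss "t + 1"] selok_ss[of rr ss t] by simp
lemma sel_fw_rs: "selok rr ss \<Longrightarrow> t + 1 \<le> p \<Longrightarrow> w2 (rr t) (ss (t + 1)) = 0"
  using Zfw[of t "t + 1" "rr t" "ss (t + 1)"] selok_mem[of rr ss t] selok_ss[of rr ss "t + 1"] by simp
lemma sel_fw_ss: "selok rr ss \<Longrightarrow> 1 \<le> t \<Longrightarrow> t + 1 \<le> p \<Longrightarrow> w2 (ss t) (ss (t + 1)) = 0"
  using Zfw[of t "t + 1" "ss t" "ss (t + 1)"] selok_ss[of rr ss t] selok_ss[of rr ss "t + 1"] by simp

lemma sel_fw_sr': "selok rr ss \<Longrightarrow> 1 \<le> t \<Longrightarrow> t \<le> p \<Longrightarrow> b = t + 1 \<Longrightarrow> w2 (ss t) (rr b) = 0"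
  using sel_fw_sr by simp

lemma R1: assumes ab: "a + 5 \<le> b" "b \<le> p" and Zb: "Z b (a + 4)" shows "Z a b"
  unfolding Z_def
proof (intro ballI impI)
  fix x y assume x: "x \<in> S a" and y: "y \<in> S b" and xy: "x \<noteq> y"
  let ?rr = "rep(a := x, b := y)" and ?ss = "alt(a := oth a x, b := oth b y)"
  have sel: "selok ?rr ?ss" unfolding selok_def
    using ab x y rep_mem alt_mem oth_mem[of a x] oth_mem[of b y] by auto
  define ws where "ws = seg 0 (a + 1) @ [(b, False)] @ seg (a + 4) b @ [(b - 1, True), (b, True)] @ seg (b + 1) (p + 2)"
  have W: "walkok ws" unfolding walkok_def ws_def using ab p4 by (auto simp: mem_seg')
  have D: "psum DW ws = 1"
    unfolding ws_def using ab p4 by (simp add: psum_app psum_Cons DW_def Dl_def; arith)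
  have "psum (W2 ?rr ?ss) ws = w2 x y + w2 y (?rr (a + 4)) + w2 (?rr (b - 1)) (?ss (b - 1))
      + w2 (?ss (b - 1)) (?ss b) + w2 (?ss b) (?rr (b + 1))"
    unfolding ws_def using ab seg_fwd[OF sel] by (simp add: psum_app psum_Cons W2_def)
  moreover have "w2 y (?rr (a + 4)) = 0"
    using Zback[OF Zb y selok_mem[OF sel, of "a + 4"]] ab by simp
  moreover have "w2 (?rr (b - 1)) (?ss (b - 1)) = 0"
    by (rule sel_flat[OF sel]) (use ab in simp_all)
  moreover have "w2 (?ss (b - 1)) (?ss b) = 0"
    using sel_fw_ss[OF sel, of "b - 1"] ab by simp
  moreover have "w2 (?ss b) (?rr (b + 1)) = 0"
    by (rule sel_fw_sr[OF sel]) (use ab in simp_all)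
  ultimately show "w2 x y = 0" using tight_zero[OF sel W D] by simp
qed

lemma J4E: assumes ab: "b = a + 4" "b \<le> p - 1" shows "Z a b"
  unfolding Z_def
proof (intro ballI impI)
  fix x y assume x: "x \<in> S a" and y: "y \<in> S b" and xy: "x \<noteq> y"
  let ?rr = "rep(a := x, b := y)" and ?ss = "alt(a := oth a x, b := oth b y)"
  have sel: "selok ?rr ?ss" unfolding selok_def
    using ab x y rep_mem alt_mem oth_mem[of a x] oth_mem[of b y] by auto
  define ws where "ws = seg 0 (a + 1) @ [(b, False), (b, True)] @ seg (b + 1) (p + 1) @ [(p, True), (p + 1, False)]"
  have W: "walkok ws" unfolding walkok_def ws_def using ab p4 by (auto simp: mem_seg')
  have D: "psum DW ws = 1"
    unfolding ws_def using ab p4 by (simp add: psum_app psum_Cons DW_def Dl_def; arith)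
  have "psum (W2 ?rr ?ss) ws = w2 x y + w2 y (?ss b) + w2 (?ss b) (?rr (b + 1))
      + w2 (?rr p) (?ss p) + w2 (?ss p) (?rr (p + 1))"
    unfolding ws_def using ab seg_fwd[OF sel] by (simp add: psum_app psum_Cons W2_def)
  moreover have "w2 y (?ss b) = 0"
    using sel_flat[OF sel, of b] ab by simp
  moreover have "w2 (?ss b) (?rr (b + 1)) = 0"
    by (rule sel_fw_sr[OF sel]) (use ab in simp_all)
  moreover have "w2 (?rr p) (?ss p) = 0"
    by (rule sel_flat[OF sel]) (use p4 in simp_all)
  moreover have "w2 (?ss p) (?rr (p + 1)) = 0"
    by (rule sel_fw_sr[OF sel]) (use p4 in simp_all)
  ultimately show "w2 x y = 0" using tight_zero[OF sel W D] by simp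
qed

lemma J4S2: assumes p6: "6 \<le> p" shows "Z (p - 4) p"
  unfolding Z_def
proof (intro ballI impI)
  fix x y assume x: "x \<in> S (p - 4)" and y: "y \<in> S p" and xy: "x \<noteq> y"
  let ?rr = "rep(p - 4 := x, p := y)" and ?ss = "alt(p - 4 := oth (p - 4) x, p := oth p y)"
  have sel: "selok ?rr ?ss" unfolding selok_def
    using p6 x y rep_mem alt_mem oth_mem[of "p - 4" x] oth_mem[of p y] by auto
  have ne4: "p - 4 \<noteq> p" "p - 4 \<noteq> 1" "p - 4 \<noteq> 0" "p - 4 \<noteq> 2 \<or> p = 6" using p6 by auto
  define ws where "ws = [(0, False), (1, False), (1, True)] @ seg 2 (p - 3) @ [(p, False), (p, True), (p + 1, False)]"
  have W: "walkok ws" unfolding walkok_def ws_def using p6 by (auto simp: mem_seg')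
  have D: "psum DW ws = 1"
    unfolding ws_def using p6 by (simp add: psum_app psum_Cons DW_def Dl_def; arith)
  have "psum (W2 ?rr ?ss) ws = w2 0 (?rr 1) + w2 (?rr 1) (?ss 1) + w2 (?ss 1) (?rr 2) + w2 x y
      + w2 y (?ss p) + w2 (?ss p) (?rr (p + 1))"
    unfolding ws_def using p6 ne4 seg_fwd[OF sel] by (simp add: psum_app psum_Cons W2_def)
  moreover have "w2 0 (?rr 1) = 0" using Z01 selok_mem[OF sel, of 1] p4 by simp
  moreover have "w2 (?rr 1) (?ss 1) = 0"
    by (rule sel_flat[OF sel]) (use p4 in simp_all)
  moreover have "w2 (?ss 1) (?rr 2) = 0"
    by (rule sel_fw_sr'[OF sel, of 1 2]) (use p4 in simp_all)
  moreover have "w2 y (?ss p) = 0"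
    using sel_flat[OF sel, of p] p6 ne4 by simp
  moreover have "w2 (?ss p) (?rr (p + 1)) = 0"
    using sel_fw_sr[OF sel, of p] p6 by simp
  ultimately show "w2 x y = 0" using tight_zero[OF sel W D] by simp
qed

lemma J4S1: assumes p5: "p = 5" shows "Z 1 5"
  unfolding Z_def
proof (intro ballI impI)
  fix x y assume x: "x \<in> S 1" and y: "y \<in> S 5" and xy: "x \<noteq> y"
  let ?rr = "rep(1 := oth 1 x, 5 := y)" and ?ss = "alt(1 := x, 5 := oth 5 y)"
  have sel: "selok ?rr ?ss" unfolding selok_def
    using p5 x y rep_mem alt_mem oth_mem[of 1 x] oth_mem[of 5 y] by auto
  define ws :: "(nat \<times> bool) list" where "ws = [(0, False), (1, False), (1, True), (5, False), (5, True), (6, False)]"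
  have W: "walkok ws" unfolding walkok_def ws_def using p5 by auto
  have D: "psum DW ws = 1"
    unfolding ws_def DW_eq Dl_def using p5 by simp
  have "psum (W2 ?rr ?ss) ws = w2 0 (?rr 1) + w2 (?rr 1) x + w2 x y
      + w2 y (?ss 5) + w2 (?ss 5) (?rr 6)"
    unfolding ws_def by (simp add: W2_def)
  moreover have "w2 0 (?rr 1) = 0" using Z01 selok_mem[OF sel, of 1] p4 by simp
  moreover have "w2 (?rr 1) x = 0"
    using sel_flat[OF sel, of 1] p4 by simp
  moreover have "w2 y (?ss 5) = 0"
    using sel_flat[OF sel, of 5] p5 by simp
  moreover have "w2 (?ss 5) (?rr 6) = 0"
    using sel_fw_sr[OF sel, of 5] p5 by simp
  ultimately show "w2 x y = 0" using tight_zero[OF sel W D] by simp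
qed

lemma C1: assumes "4 \<le> m" shows "\<forall>a b. b = a + m \<longrightarrow> b \<le> p \<longrightarrow> \<not> (a = 0 \<and> b = 4 \<and> p = 4) \<longrightarrow> Z a b"
  using assms
proof (induction m rule: dec_induct)
  case base
  show ?case
  proof (intro allI impI)
    fix a b assume h: "b = a + 4" "b \<le> p" "\<not> (a = 0 \<and> b = 4 \<and> p = 4)"
    show "Z a b"
    proof (cases "b \<le> p - 1")
      case True then show ?thesis using J4E h by simp
    next
      case False
      then have bp: "b = p" using h by simp
      consider "2 \<le> a" | "a = 1" | "a = 0" by linarith
      then show ?thesis
      proof cases
        case 1
        then have "6 \<le> p" "a = p - 4" using h bp by auto
        then show ?thesis using J4S2 bp by simp
      next
        case 2 then show ?thesis using J4S1 h bp by simp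
      next
        case 3 then show ?thesis using h bp by simp
      qed
    qed
  qed
next
  case (step m)
  show ?case
  proof (intro allI impI)
    fix a b assume h: "b = a + Suc m" "b \<le> p" "\<not> (a = 0 \<and> b = 4 \<and> p = 4)"
    have IH': "\<And>a' b'. b' = a' + m \<Longrightarrow> b' \<le> p \<Longrightarrow> \<not> (a' = 0 \<and> b' = 4 \<and> p = 4) \<Longrightarrow> Z a' b'"
      using step.IH by blast
    have "Z (a + 1) b" by (rule IH') (use h in simp_all)
    then have "Z b (a + 4)" using R2[of a b] h step.hyps by simp
    then show "Z a b" using R1[of a b] h step.hyps by simp
  qed
qed

lemma Zbig: assumes h: "a + 4 \<le> b" "b \<le> p" "\<not> (a = 0 \<and> b = 4 \<and> p = 4)" shows "Z a b"
proof -
  have "4 \<le> b - a" using h by simp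
  then have "\<forall>a' b'. b' = a' + (b - a) \<longrightarrow> b' \<le> p \<longrightarrow> \<not> (a' = 0 \<and> b' = 4 \<and> p = 4) \<longrightarrow> Z a' b'"
    by (rule C1)
  then have "b = a + (b - a) \<longrightarrow> b \<le> p \<longrightarrow> \<not> (a = 0 \<and> b = 4 \<and> p = 4) \<longrightarrow> Z a b" by blast
  then show ?thesis using h by simp
qed

end

context JSW
begin

lemma repSuc[simp]: "rep (Suc p) = n" using repn by simp

lemma sel_fw_rs': "selok rr ss \<Longrightarrow> b \<le> p \<Longrightarrow> b = t + 1 \<Longrightarrow> w2 (rr t) (ss b) = 0"
  using sel_fw_rs by simp

lemma C4w: assumes h: "1 \<le> J" "J < I" "I \<le> p - 2" and Zj: "Z J (I + 3)" shows "Z I J"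
  unfolding Z_def
proof (intro ballI impI)
  fix x y assume x: "x \<in> S I" and y: "y \<in> S J" and xy: "x \<noteq> y"
  let ?rr = "rep(I := x, J := oth J y)" and ?ss = "alt(I := oth I x, J := y)"
  have sel: "selok ?rr ?ss" unfolding selok_def
    using h p4 x y rep_mem alt_mem oth_mem[of I x] oth_mem[of J y] by auto
  define ws where "ws = seg 0 (I + 1) @ [(J, True)] @ seg (I + 3) (p + 2)"
  have W: "walkok ws" unfolding walkok_def ws_def using h p4 by (auto simp: mem_seg')
  have D: "psum DW ws = 1"
    unfolding ws_def using h p4 by (simp add: psum_app psum_Cons DW_def Dl_def; arith)
  have "psum (W2 ?rr ?ss) ws = w2 x y + w2 y (?rr (I + 3))"
    unfolding ws_def using h p4 seg_fwd[OF sel] by (simp add: psum_app psum_Cons W2_def)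
  moreover have "w2 y (?rr (I + 3)) = 0"
    using Zl[OF Zj y selok_mem[OF sel, of "I + 3"]] h by simp
  ultimately show "w2 x y = 0" using tight_zero[OF sel W D] by simp
qed

lemma C2a: assumes h: "1 \<le> a" "a + 4 \<le> p" and Zb: "Z (p - 3) a" shows "Z a (p + 1)"
  unfolding Z_def
proof (intro ballI impI)
  fix x y assume x: "x \<in> S a" and y: "y \<in> S (p + 1)" and xy: "x \<noteq> y"
  have yn: "y = n" using y Sp1 by simp
  let ?rr = "rep(a := oth a x)" and ?ss = "alt(a := x)"
  have sel: "selok ?rr ?ss" unfolding selok_def
    using h p4 x rep_mem alt_mem oth_mem[of a x] by auto
  define ws where "ws = seg 0 (p - 2) @ [(p - 3, True), (a, True), (p + 1, False)]"
  have W: "walkok ws" unfolding walkok_def ws_def using h p4 by (auto simp: mem_seg')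
  have D: "psum DW ws = 1"
    unfolding ws_def using h p4 by (simp add: psum_app psum_Cons DW_def Dl_def; arith)
  have "psum (W2 ?rr ?ss) ws = w2 (?rr (p - 3)) (?ss (p - 3)) + w2 (?ss (p - 3)) x + w2 x n"
    unfolding ws_def using h p4 seg_fwd[OF sel] by (simp add: psum_app psum_Cons W2_def)
  moreover have "w2 (?rr (p - 3)) (?ss (p - 3)) = 0"
    by (rule sel_flat[OF sel]) (use h in simp_all)
  moreover have "w2 (?ss (p - 3)) x = 0"
    using Zl[OF Zb selok_ss[OF sel, of "p - 3", THEN conjunct1] x] h by simp
  ultimately show "w2 x y = 0" using tight_zero[OF sel W D] yn by simp
qed

lemma C2b: assumes p5: "5 \<le> p" shows "Z (p - 3) (p + 1)"
  unfolding Z_def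
proof (intro ballI impI)
  fix x y assume x: "x \<in> S (p - 3)" and y: "y \<in> S (p + 1)" and xy: "x \<noteq> y"
  have yn: "y = n" using y Sp1 by simp
  have ne: "p - 3 \<noteq> 1" "p - 3 \<noteq> 0" "p - 3 \<noteq> p" "Suc p \<noteq> p - 3" "p - 3 \<noteq> 2 \<or> p = 5" using p5 by auto
  let ?rr = "rep(p - 3 := oth (p - 3) x)" and ?ss = "alt(p - 3 := x)"
  have sel: "selok ?rr ?ss" unfolding selok_def
    using p5 x rep_mem alt_mem oth_mem[of "p - 3" x] by auto
  define ws where "ws = [(0, False), (1, False), (1, True)] @ seg 2 (p - 2) @ [(p - 3, True), (p + 1, False)]"
  have W: "walkok ws" unfolding walkok_def ws_def using p5 by (auto simp: mem_seg')
  have D: "psum DW ws = 1"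
    unfolding ws_def using p5 by (simp add: psum_app psum_Cons DW_def Dl_def; arith)
  have "psum (W2 ?rr ?ss) ws = w2 0 (?rr 1) + w2 (?rr 1) (?ss 1) + w2 (?ss 1) (?rr 2)
      + w2 (?rr (p - 3)) x + w2 x n"
    unfolding ws_def using p5 ne seg_fwd[OF sel] by (simp add: psum_app psum_Cons W2_def)
  moreover have "w2 0 (?rr 1) = 0" using Z01 selok_mem[OF sel, of 1] p4 by simp
  moreover have "w2 (?rr 1) (?ss 1) = 0"
    by (rule sel_flat[OF sel]) (use p4 in simp_all)
  moreover have "w2 (?ss 1) (?rr 2) = 0"
    by (rule sel_fw_sr'[OF sel, of 1 2]) (use p4 in simp_all)
  moreover have "w2 (?rr (p - 3)) x = 0"
    using sel_flat[OF sel, of "p - 3"] p5 by simp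
  ultimately show "w2 x y = 0" using tight_zero[OF sel W D] yn by simp
qed

lemma SP1: assumes p4e: "p = 4" shows "Z p 2"
  unfolding Z_def
proof (intro ballI impI)
  fix x y assume x: "x \<in> S p" and y: "y \<in> S 2" and xy: "x \<noteq> y"
  have ne: "p \<noteq> 1" "p \<noteq> 2" "p \<noteq> 0" "p \<noteq> 3" using p4e by auto
  let ?rr = "rep(p := x, 2 := y)" and ?ss = "alt(p := oth p x, 2 := oth 2 y)"
  have sel: "selok ?rr ?ss" unfolding selok_def
    using p4 x y rep_mem alt_mem oth_mem[of p x] oth_mem[of 2 y] by auto
  define ws :: "(nat \<times> bool) list" where "ws = [(0, False), (1, False), (p, False), (2, False), (p + 1, False)]"
  have W: "walkok ws" unfolding walkok_def ws_def using p4e by auto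
  have D: "psum DW ws = 1"
    unfolding ws_def DW_eq Dl_def using p4e by simp
  have "psum (W2 ?rr ?ss) ws = w2 0 (rep 1) + w2 (rep 1) x + w2 x y + w2 y n"
    unfolding ws_def using ne by (simp add: W2_def)
  moreover have "w2 0 (rep 1) = 0" using Z01 rep_mem p4 by simp
  moreover have "w2 (rep 1) x = 0"
  proof -
    have "Z 1 p" using Z3[of 1] p4e by simp
    then show ?thesis using Zl[of 1 p "rep 1" x] rep_mem[of 1] x ne by simp
  qed
  moreover have "w2 y n = 0"
  proof -
    have "Z 2 (p + 1)" using Z3[of 2] p4e by simp
    then show ?thesis using Zl[of 2 "p + 1" y n] y Sp1 ne by simp
  qed
  ultimately show "w2 x y = 0" using tight_zero[OF sel W D] by simp
qed

lemma SP2: assumes p4e: "p = 4" shows "Z 0 p"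
  unfolding Z_def
proof (intro ballI impI)
  fix x y assume x: "x \<in> S 0" and y: "y \<in> S p" and xy: "x \<noteq> y"
  have x0: "x = 0" using x S0 by simp
  have ne: "p \<noteq> 1" "p \<noteq> 2" "p \<noteq> 0" "p \<noteq> 3" using p4e by auto
  let ?rr = "rep(p := y)" and ?ss = "alt(p := oth p y)"
  have sel: "selok ?rr ?ss" unfolding selok_def
    using p4 y rep_mem alt_mem oth_mem[of p y] by auto
  define ws :: "(nat \<times> bool) list" where "ws = [(0, False), (p, False), (2, False), (3, False), (p + 1, False)]"
  have W: "walkok ws" unfolding walkok_def ws_def using p4e by auto
  have D: "psum DW ws = 1"
    unfolding ws_def DW_eq Dl_def using p4e by simp
  have "psum (W2 ?rr ?ss) ws = w2 0 y + w2 y (rep 2) + w2 (rep 2) (rep 3) + w2 (rep 3) n"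
    unfolding ws_def using ne by (simp add: W2_def)
  moreover have "w2 y (rep 2) = 0" using Zl[OF SP1[OF p4e] y, of "rep 2"] rep_mem[of 2] ne p4 by simp
  moreover have "w2 (rep 2) (rep 3) = 0" by (rule Zfw[of 2 3]) (use rep_mem p4 in simp_all)
  moreover have "w2 (rep 3) n = 0"
  proof -
    have "Z 3 (p + 1)" using Z2[of 3] p4e by simp
    then show ?thesis using Zl[of 3 "p + 1" "rep 3" n] rep_mem[of 3] Sp1 ne p4 by simp
  qed
  ultimately show "w2 x y = 0" using tight_zero[OF sel W D] x0 by simp
qed

lemma C5_1: assumes I: "I = p - 1 \<or> I = p" and Z0: "Z 0 I" shows "Z I 1"
  unfolding Z_def
proof (intro ballI impI)
  fix x y assume x: "x \<in> S I" and y: "y \<in> S 1" and xy: "x \<noteq> y"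
  have Ib: "3 \<le> I" "I \<le> p" using I p4 by auto
  have ne: "p - 2 \<noteq> I" "p - 2 \<noteq> 1" "p - Suc (Suc 0) = p - 2" using I p4 by auto
  let ?rr = "rep(I := x, 1 := y)" and ?ss = "alt(I := oth I x, 1 := oth 1 y)"
  have sel: "selok ?rr ?ss" unfolding selok_def
    using p4 Ib x y rep_mem alt_mem oth_mem[of I x] oth_mem[of 1 y] by auto
  define ws where "ws = [(0, False), (I, False), (1, False)] @ seg 2 (p - 1) @ [(p + 1, False)]"
  have W: "walkok ws" unfolding walkok_def ws_def using p4 I by (auto simp: mem_seg')
  have D: "psum DW ws = 1"
    unfolding ws_def using p4 I by (simp add: psum_app psum_Cons DW_def Dl_def; arith)
  have "psum (W2 ?rr ?ss) ws = w2 0 x + w2 x y + w2 y (?rr 2) + w2 (rep (p - 2)) n"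
    unfolding ws_def using p4 Ib ne seg_fwd[OF sel] by (simp add: psum_app psum_Cons W2_def)
  moreover have "w2 0 x = 0" using Zl[OF Z0, of 0 x] S0 x Ib by simp
  moreover have "w2 y (?rr 2) = 0" by (rule Zfw[of 1 2]) (use y selok_mem[OF sel, of 2] p4 Ib in simp_all)
  moreover have "w2 (rep (p - 2)) n = 0"
  proof -
    have "Z (p - 2) (p - 2 + 3)" using Z3[of "p - 2"] p4 by simp
    then show ?thesis using Zl[of "p - 2" "p - 2 + 3" "rep (p - 2)" n] rep_mem[of "p - 2"] Sp1 p4 by simp
  qed
  ultimately show "w2 x y = 0" using tight_zero[OF sel W D] by simp
qed

lemma C5_2a: assumes Z0: "Z 0 p" shows "Z p 2"
  unfolding Z_def
proof (intro ballI impI)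
  fix x y assume x: "x \<in> S p" and y: "y \<in> S 2" and xy: "x \<noteq> y"
  let ?rr = "rep(p := x, 2 := y)" and ?ss = "alt(p := oth p x, 2 := oth 2 y)"
  have sel: "selok ?rr ?ss" unfolding selok_def
    using p4 x y rep_mem alt_mem oth_mem[of p x] oth_mem[of 2 y] by auto
  define ws where "ws = [(0, False), (p, False), (2, False)] @ seg 3 p @ [(p + 1, False)]"
  have W: "walkok ws" unfolding walkok_def ws_def using p4 by (auto simp: mem_seg')
  have D: "psum DW ws = 1"
    unfolding ws_def using p4 by (simp add: psum_app psum_Cons DW_def Dl_def; arith)
  have "psum (W2 ?rr ?ss) ws = w2 0 x + w2 x y + w2 y (?rr 3) + w2 (?rr (p - 1)) n"
    unfolding ws_def using p4 seg_fwd[OF sel] by (simp add: psum_app psum_Cons W2_def)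
  moreover have "w2 0 x = 0" using Zl[OF Z0, of 0 x] S0 x p4 by simp
  moreover have "w2 y (?rr 3) = 0" by (rule Zfw[of 2 3]) (use y selok_mem[OF sel, of 3] p4 in simp_all)
  moreover have "w2 (?rr (p - 1)) n = 0"
  proof -
    have "Z (p - 1) (p - 1 + 2)" using Z2[of "p - 1"] p4 by simp
    then show ?thesis using Zl[of "p - 1" "p - 1 + 2" "?rr (p - 1)" n] selok_mem[OF sel, of "p - 1"] Sp1 p4 by simp
  qed
  ultimately show "w2 x y = 0" using tight_zero[OF sel W D] by simp
qed

lemma C5_2b: assumes Z0: "Z 0 (p - 1)" shows "Z (p - 1) 2"
  unfolding Z_def
proof (intro ballI impI)
  fix x y assume x: "x \<in> S (p - 1)" and y: "y \<in> S 2" and xy: "x \<noteq> y"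
  have ne: "p - 1 \<noteq> 2" "p - 1 \<noteq> 0" "p - 1 \<noteq> p" using p4 by auto
  let ?rr = "rep(p - 1 := x, 2 := y)" and ?ss = "alt(p - 1 := oth (p - 1) x, 2 := oth 2 y)"
  have sel: "selok ?rr ?ss" unfolding selok_def
    using p4 x y rep_mem alt_mem oth_mem[of "p - 1" x] oth_mem[of 2 y] by auto
  define ws where "ws = [(0, False), (p - 1, False), (2, False)] @ seg 3 (p - 1) @ seg p (p + 2)"
  have W: "walkok ws" unfolding walkok_def ws_def using p4 by (auto simp: mem_seg')
  have wz: "w2 0 x = 0" using Zl[OF Z0, of 0 x] S0 x p4 by simp
  have D: "psum DW ws = 1"
  proof (cases "p = 4")
    case True
    then have "seg 3 (p - 1) = []" by (simp add: seg_Nil)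
    then show ?thesis unfolding ws_def using p4 by (simp add: psum_app psum_Cons DW_def Dl_def; arith)
  next
    case False
    then show ?thesis unfolding ws_def using p4 by (simp add: psum_app psum_Cons DW_def Dl_def; arith)
  qed
  have rz: "w2 (rep (p - 2)) (rep p) = 0" if "p \<noteq> 4"
  proof -
    have "Z (p - 2) (p - 2 + 2)" using Z2[of "p - 2"] p4 by simp
    moreover have "Suc (Suc (p - 2)) = p" using p4 by simp
    ultimately show ?thesis using Zl[of "p - 2" "p - 2 + 2" "rep (p - 2)" "rep p"] rep_mem[of "p - 2"] rep_mem[of p] p4 by simp
  qed
  show "w2 x y = 0"
  proof (cases "p = 4")
    case True
    then have e: "seg 3 (p - 1) = []" by (simp add: seg_Nil)
    have e2: "p - 2 = 2" "p - Suc (Suc 0) = 2" using True by auto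
    have "psum (W2 ?rr ?ss) ws = w2 0 x + w2 x y + w2 y (rep p)"
      unfolding ws_def e using p4 ne e2 seg_fwd[OF sel] by (simp add: psum_app psum_Cons W2_def)
    moreover have "w2 y (rep p) = 0"
    proof -
      have "Z 2 (2 + 2)" using Z2[of 2] p4 by simp
      then show ?thesis using Zl[of 2 "2 + 2" y "rep p"] y rep_mem[of p] True by simp
    qed
    ultimately show ?thesis using tight_zero[OF sel W D] wz by simp
  next
    case False
    have ne2: "p - 1 \<noteq> 3" "p - 2 \<noteq> 2" "p - Suc (Suc 0) = p - 2" "p - 2 \<noteq> p - 1" using False p4 by auto
    have "psum (W2 ?rr ?ss) ws = w2 0 x + w2 x y + w2 y (rep 3) + w2 (rep (p - 2)) (rep p)"
      unfolding ws_def using p4 ne ne2 False seg_fwd[OF sel] by (simp add: psum_app psum_Cons W2_def)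
    moreover have "w2 y (rep 3) = 0" by (rule Zfw[of 2 3]) (use y rep_mem p4 in simp_all)
    ultimately show ?thesis using tight_zero[OF sel W D] wz rz False by simp
  qed
qed

lemma SP3: assumes p4e: "p = 4" shows "Z 1 (p + 1)"
  unfolding Z_def
proof (intro ballI impI)
  fix x y assume x: "x \<in> S 1" and y: "y \<in> S (p + 1)" and xy: "x \<noteq> y"
  have yn: "y = n" using y Sp1 by simp
  have ne: "p \<noteq> 1" "p \<noteq> 2" "p \<noteq> 0" "p \<noteq> 3" using p4e by auto
  let ?rr = "rep(1 := oth 1 x)" and ?ss = "alt(1 := x)"
  have sel: "selok ?rr ?ss" unfolding selok_def
    using p4 x rep_mem alt_mem oth_mem[of 1 x] by auto
  define ws :: "(nat \<times> bool) list" where "ws = [(0, False), (1, False), (p, False), (1, True), (p + 1, False)]"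
  have W: "walkok ws" unfolding walkok_def ws_def using p4e by auto
  have D: "psum DW ws = 1"
    unfolding ws_def DW_eq Dl_def using p4e by simp
  have "psum (W2 ?rr ?ss) ws = w2 0 (oth 1 x) + w2 (oth 1 x) (rep p) + w2 (rep p) x + w2 x n"
    unfolding ws_def using ne by (simp add: W2_def)
  moreover have "w2 0 (oth 1 x) = 0" using Z01 oth_mem[of 1 x] x p4 by simp
  moreover have "w2 (oth 1 x) (rep p) = 0"
  proof -
    have "Z 1 p" using Z3[of 1] p4e by simp
    then show ?thesis using Zl[of 1 p "oth 1 x" "rep p"] oth_mem[of 1 x] x rep_mem[of p] ne p4 by simp
  qed
  moreover have "w2 (rep p) x = 0"
  proof -
    have "Z p 1" using C5_1[of p] SP2[OF p4e] by simp
    then show ?thesis using Zl[of p 1 "rep p" x] x rep_mem[of p] ne by simp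
  qed
  ultimately show "w2 x y = 0" using tight_zero[OF sel W D] yn by simp
qed

lemma Zjump: assumes h: "a + 2 \<le> b" "b \<le> p + 1" "\<not> (a = 0 \<and> b = p + 1)" shows "Z a b"
proof -
  consider "b = a + 2" | "b = a + 3" | "a + 4 \<le> b" "b \<le> p" | "a + 4 \<le> b" "b = p + 1" using h by linarith
  then show ?thesis
  proof cases
    case 1 then show ?thesis using Z2 h by simp
  next
    case 2 then show ?thesis using Z3 h by simp
  next
    case 3
    show ?thesis
    proof (cases "a = 0 \<and> b = 4 \<and> p = 4")
      case True then show ?thesis using SP2 by simp
    next
      case False then show ?thesis using Zbig 3 by simp
    qed
  next
    case 4
    have a1: "1 \<le> a" using h 4 by simp
    show ?thesis
    proof (cases "p = 4")
      case True
      then have "a = 1" using 4 a1 by simp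
      then show ?thesis using SP3[OF True] 4 by simp
    next
      case False
      then have p5: "5 \<le> p" using p4 by simp
      show ?thesis
      proof (cases "a = p - 3")
        case True then show ?thesis using C2b[OF p5] 4 by simp
      next
        case False
        then have a4: "a + 4 \<le> p" using 4 by simp
        have "Z a p" using Zbig[of a p] a4 a1 by simp
        then have "Z (p - 3) a" using C4w[of a "p - 3"] a1 a4 by simp
        then show ?thesis using C2a[OF a1 a4] 4 by simp
      qed
    qed
  qed
qed

end

context JSW
begin

lemma C3w: assumes h: "3 \<le> J" "J < I" "I \<le> p" and Zj: "Z (J - 3) I" shows "Z I J"
  unfolding Z_def
proof (intro ballI impI)
  fix x y assume x: "x \<in> S I" and y: "y \<in> S J" and xy: "x \<noteq> y"
  let ?rr = "rep(I := x, J := y)" and ?ss = "alt(I := oth I x, J := oth J y)"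
  have sel: "selok ?rr ?ss" unfolding selok_def
    using h x y rep_mem alt_mem oth_mem[of I x] oth_mem[of J y] by auto
  have ne: "J - 3 \<noteq> I" "J - 3 \<noteq> J" "J - Suc (Suc (Suc 0)) = J - 3" using h by auto
  define ws where "ws = seg 0 (J - 2) @ [(I, False)] @ seg J I @ [(I, True)] @ seg (I + 1) (p + 2)"
  have W: "walkok ws" unfolding walkok_def ws_def using h p4 by (auto simp: mem_seg')
  have D: "psum DW ws = 1"
    unfolding ws_def using h p4 by (simp add: psum_app psum_Cons DW_def Dl_def; arith)
  have "psum (W2 ?rr ?ss) ws = w2 (rep (J - 3)) x + w2 x y + w2 (?rr (I - 1)) (?ss I) + w2 (?ss I) (?rr (I + 1))"
    unfolding ws_def using h ne seg_fwd[OF sel] by (simp add: psum_app psum_Cons W2_def)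
  moreover have "w2 (rep (J - 3)) x = 0"
    using Zl[OF Zj rep_mem[of "J - 3"] x] h by simp
  moreover have "w2 (?rr (I - 1)) (?ss I) = 0"
    by (rule sel_fw_rs'[OF sel]) (use h in simp_all)
  moreover have "w2 (?ss I) (?rr (I + 1)) = 0"
    by (rule sel_fw_sr'[OF sel]) (use h in simp_all)
  ultimately show "w2 x y = 0" using tight_zero[OF sel W D] by simp
qed

lemma Zback_all: assumes h: "1 \<le> b" "b < a" "a \<le> p" shows "Z a b"
proof (cases "a \<le> p - 2")
  case True
  have "Z b (a + 3)" using Zjump[of b "a + 3"] h True by simp
  then show ?thesis using C4w[of b a] h True by simp
next
  case False
  then have a2: "a = p - 1 \<or> a = p" using h by auto
  consider "3 \<le> b" | "b = 1" | "b = 2" using h by linarith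
  then show ?thesis
  proof cases
    case 1
    have "Z (b - 3) a" using Zjump[of "b - 3" a] h 1 by simp
    then show ?thesis using C3w[of b a] h 1 by simp
  next
    case 2
    have "Z 0 a" using Zjump[of 0 a] a2 p4 by auto
    then show ?thesis using C5_1[of a] a2 2 by simp
  next
    case 3
    show ?thesis
    proof (cases "a = p")
      case True
      have "Z 0 p" using Zjump[of 0 p] p4 by simp
      then show ?thesis using C5_2a True 3 by simp
    next
      case False
      then have ap: "a = p - 1" using a2 by simp
      have "Z 0 (p - 1)" using Zjump[of 0 "p - 1"] p4 by simp
      then show ?thesis using C5_2b ap 3 by simp
    qed
  qed
qed

lemma all_arcs: assumes e: "(x, y) \<in> arcs n" shows "w2 x y = 0"
proof -
  have le: "x \<le> n" "y \<le> n" and xy: "x \<noteq> y" "y \<noteq> 0" "x \<noteq> n" "\<not> (x = 0 \<and> y = n)"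
    using e unfolding arcs_def by auto
  define a where "a = lay x"
  define b where "b = lay y"
  have xa: "x \<in> S a" "a \<le> p + 1" using lay_mem[OF le(1)] a_def by auto
  have yb: "y \<in> S b" "b \<le> p + 1" using lay_mem[OF le(2)] b_def by auto
  have ap: "a \<le> p" using xa lay_n_iff[OF le(1)] xy(3) a_def by (cases "a = p + 1") auto
  have b1: "1 \<le> b" using lay_0_iff[OF le(2)] xy(2) b_def by (cases "b = 0") auto
  have nz: "\<not> (a = 0 \<and> b = p + 1)"
  proof
    assume "a = 0 \<and> b = p + 1"
    then have "x = 0" "y = n" using xa yb S0 Sp1 by auto
    then show False using xy(4) by simp
  qed
  consider "b = a + 1" | "a + 2 \<le> b" | "b = a" | "b < a" by linarith
  then show ?thesis
  proof cases
    case 1 then show ?thesis using Zw[OF Z1[OF ap] xa(1)] yb xy by simp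
  next
    case 2 show ?thesis using Zw[OF Zjump[OF 2 yb(2) nz] xa(1) yb(1) xy(1)] .
  next
    case 3 then show ?thesis using Zw[OF Zflat[of a] xa(1)] yb xy b1 ap by simp
  next
    case 4 show ?thesis using Zw[OF Zback_all[OF b1 4 ap] xa(1) yb(1) xy(1)] .
  qed
qed

theorem dual_core: "is_pPath n p vs \<Longrightarrow> psum (\<lambda>a b. w (a, b)) vs = K + be * (ell vs - 1)"
proof -
  assume P: "is_pPath n p vs"
  have len: "length vs = p + 1" using P by (simp add: is_pPath_def)
  have "psum w2 vs = 0"
  proof (rule psum_zero)
    fix k assume "Suc k < length vs"
    then have "k < p" using len by simp
    then show "w2 (vs ! k) (vs ! Suc k) = 0" using all_arcs path_arc[OF P] by simp
  qed
  then show ?thesis using path_split[OF P] C_zero by (simp add: algebra_simps)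
qed

end

lemma sum_fun_apply: "(\<Sum>a\<in>A. f a) x = (\<Sum>a\<in>A. f a x)" for f :: "'a \<Rightarrow> 'b \<Rightarrow> real"
proof (cases "finite A")
  case True then show ?thesis by (induction A rule: finite_induct) auto
next
  case False then show ?thesis by simp
qed

lemma scaleR_fun_apply[simp]: "(c *\<^sub>R f) x = c *\<^sub>R f x"
  by (simp add: scaleR_fun_def)

lemma minus_fun_apply'[simp]: "(f - g) x = f x - (g x :: real)"
  by simp

lemma mem_segx: "e \<in> set (seg a b) \<longleftrightarrow> \<not> snd e \<and> a \<le> fst e \<and> fst e < b"
  by (cases e) simp

definition ind :: "nat \<times> nat \<Rightarrow> nat \<times> nat \<Rightarrow> real" where
  "ind a = (\<lambda>e. if e = a then 1 else 0)"

lemma incidence_sum: "incidence vs = (\<Sum>a\<in>set (zip vs (tl vs)). ind a)"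
proof (rule ext)
  fix e
  have "(\<Sum>a\<in>set (zip vs (tl vs)). ind a) e = (\<Sum>a\<in>set (zip vs (tl vs)). if e = a then 1 else 0)"
    by (simp add: sum_fun_apply ind_def)
  also have "\<dots> = (if e \<in> set (zip vs (tl vs)) then 1 else 0)"
    by (simp add: sum.delta)
  finally show "incidence vs e = (\<Sum>a\<in>set (zip vs (tl vs)). ind a) e"
    by (simp add: incidence_def)
qed

lemma linear_incidence:
  assumes g: "linear g" and d: "distinct vs"
  shows "g (incidence vs) = psum (\<lambda>a b. g (ind (a, b))) vs"
proof -
  have dz: "distinct (zip vs (tl vs))" using d by (rule distinct_zipI1)
  have "g (incidence vs) = (\<Sum>a\<in>set (zip vs (tl vs)). g (ind a))"
    unfolding incidence_sum using g by (simp add: linear_sum)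
  also have "\<dots> = sum_list (map (\<lambda>a. g (ind a)) (zip vs (tl vs)))"
    using dz by (simp add: sum.distinct_set_conv_list)
  also have "\<dots> = psum (\<lambda>a b. g (ind (a, b))) vs"
    by (simp add: psum_zip case_prod_beta')
  finally show ?thesis .
qed

context JS
begin

definition Lf :: "(nat \<times> nat \<Rightarrow> real) \<Rightarrow> real" where
  "Lf x = (\<Sum>e\<in>arcs n. dl e * x e)"

lemma Lf_linear: "linear Lf"
  by (rule linearI) (simp_all add: Lf_def sum.distrib algebra_simps sum_distrib_left)

lemma jump_Lf: "jump_lhs n p S x = Lf x"
  by (simp add: jump_lhs_eq Lf_def)

lemma Lf_diff: "Lf (x - y) = Lf x - Lf y"
  using Lf_linear by (simp add: linear_diff)

lemma Lf_comb: "Lf ((1 - u) *\<^sub>R a + u *\<^sub>R b) = (1 - u) * Lf a + u * Lf b"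
  using Lf_linear by (simp add: linear_add linear_scale)

lemma JS_inst: "JS n p S"
  by unfold_locales (use n_pos p4 S_sub S_cover S_disj S0 Sp1 S_card in auto)

lemma tight_exists: "\<exists>vs. is_pPath n p vs \<and> ell vs = 1"
proof -
  define ws where "ws = (0, False) # seg 2 (p + 2)"
  have W: "walkok ws" unfolding walkok_def ws_def using p4 by (auto simp: mem_segx)
  have D: "psum (\<lambda>e f. Dl (fst e) (fst f)) ws = 1"
  proof -
    have "psum (\<lambda>e f. Dl (fst e) (fst f)) ws = Dl 0 2 + psum (\<lambda>e f. Dl (fst e) (fst f)) (seg 2 (p + 2))"
      unfolding ws_def using p4 by (simp add: psum_Cons)
    also have "psum (\<lambda>e f. Dl (fst e) (fst f)) (seg 2 (p + 2)) = 0"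
      unfolding psum_seg using p4 by (intro sum_zero) (simp add: Dl_def)
    finally show ?thesis using p4 by (simp add: Dl_def)
  qed
  show ?thesis using walk_path[OF selok_rep W] walk_ell[OF selok_rep W] D by (intro exI[of _ "map (V rep alt) ws"]) simp
qed

lemma two_exists: "\<exists>vs. is_pPath n p vs \<and> ell vs = 2"
proof -
  define ws where "ws = [(0, False), (1, False), (1, True), (3, False)] @ seg 5 (p + 2)"
  have W: "walkok ws" unfolding walkok_def ws_def using p4 by (auto simp: mem_segx)
  have D: "psum (\<lambda>e f. Dl (fst e) (fst f)) ws = 2"
  proof -
    have ne: "[(0, False), (1, False), (1, True), (3, False)] \<noteq> []" "seg 5 (p + 2) \<noteq> []" using p4 by auto
    have "psum (\<lambda>e f. Dl (fst e) (fst f)) (seg 5 (p + 2)) = 0"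
      unfolding psum_seg using p4 by (intro sum_zero) (simp add: Dl_def)
    then show ?thesis unfolding ws_def psum_append[OF ne] using p4 by (simp add: Dl_def)
  qed
  show ?thesis using walk_path[OF selok_rep W] walk_ell[OF selok_rep W] D by (intro exI[of _ "map (V rep alt) ws"]) simp
qed

definition PX :: "(nat \<times> nat \<Rightarrow> real) set" where
  "PX = {incidence vs | vs. is_pPath n p vs}"

lemma finite_PX: "finite PX"
proof -
  have "{vs. is_pPath n p vs} \<subseteq> {vs. set vs \<subseteq> {0..n} \<and> length vs = p + 1}"
    using path_le by (auto simp: is_pPath_def)
  then have "finite {vs. is_pPath n p vs}"
    by (rule finite_subset) (rule finite_lists_length_eq, simp)
  moreover have "PX = incidence ` {vs. is_pPath n p vs}" by (auto simp: PX_def)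
  ultimately show ?thesis by simp
qed

lemma PX_Lf: "z \<in> PX \<Longrightarrow> \<exists>vs. is_pPath n p vs \<and> z = incidence vs \<and> Lf z = ell vs"
  unfolding PX_def using jump_incidence jump_Lf by auto

lemma PX_valid: "z \<in> PX \<Longrightarrow> Lf z \<ge> 1"
  using PX_Lf valid_path by fastforce

lemma span_claim:
  assumes f0: "f0 = incidence f0v" "is_pPath n p f0v" "ell f0v = 1"
    and x0: "x0 = incidence x0v" "is_pPath n p x0v" "ell x0v = 2"
    and H: "H = insert (x0 - f0) ((\<lambda>z. z - f0) ` {z \<in> PX. Lf z = 1})"
    and z: "z \<in> PX"
  shows "z - f0 \<in> span H"
proof (rule ccontr)
  assume nz: "z - f0 \<notin> span H"
  obtain B where B: "B \<subseteq> H" "independent B" "H \<subseteq> span B"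
    using maximal_independent_subset[of H] by blast
  have nzB: "z - f0 \<notin> span B" using nz span_mono[OF B(1)] by blast
  have indep: "independent (insert (z - f0) B)" using independent_insertI[OF nzB B(2)] .
  obtain g :: "(nat \<times> nat \<Rightarrow> real) \<Rightarrow> real"
    where g: "linear g" "\<forall>x\<in>insert (z - f0) B. g x = (if x = z - f0 then 1 else 0)"
    using linear_independent_extend[OF indep, of "\<lambda>x. if x = z - f0 then 1 else (0::real)"] by (elim exE conjE) blast
  have gB: "\<forall>x\<in>B. g x = 0"
  proof
    fix x assume "x \<in> B"
    moreover then have "x \<noteq> z - f0" using nzB span_base by blast
    ultimately show "g x = 0" using g(2) by simp
  qed
  have gH: "g h = 0" if "h \<in> H" for h
  proof -
    have "h \<in> span B" using B(3) that by blast
    then show ?thesis using linear_eq_0_on_span[OF g(1), of B h] gB by blast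
  qed
  have gz: "g (z - f0) = 1" using g(2) by simp
  define w where "w = (\<lambda>a. g (ind a))"
  define K where "K = g f0"
  have ginc: "g (incidence vs) = psum (\<lambda>a b. w (a, b)) vs" if "is_pPath n p vs" for vs
    unfolding w_def using linear_incidence[OF g(1)] that by (simp add: is_pPath_def)
  have tightw: "psum (\<lambda>a b. w (a, b)) vs = K" if P: "is_pPath n p vs" and e: "ell vs = 1" for vs
  proof -
    have inPX: "incidence vs \<in> PX" using P by (auto simp: PX_def)
    have "Lf (incidence vs) = 1" using jump_incidence[OF P] jump_Lf e by simp
    then have "incidence vs - f0 \<in> H" using inPX H by blast
    then have "g (incidence vs - f0) = 0" by (rule gH)
    then have "g (incidence vs) = g f0" using g(1) by (simp add: linear_diff)
    then show ?thesis using ginc[OF P] K_def by simp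
  qed
  interpret J: JSW n p S w K
    by (rule JSW.intro[OF JS_inst]) (unfold_locales, rule tightw)
  have gx0: "g x0 = K"
  proof -
    have "x0 - f0 \<in> H" using H by simp
    then have "g (x0 - f0) = 0" by (rule gH)
    then show ?thesis using g(1) K_def by (simp add: linear_diff)
  qed
  have "g x0 = K + J.be * (ell x0v - 1)" using ginc[OF x0(2)] J.dual_core[OF x0(2)] x0(1) by simp
  then have be0: "J.be = 0" using gx0 x0(3) by simp
  obtain zv where zv: "is_pPath n p zv" "z = incidence zv" using z by (auto simp: PX_def)
  have "g z = K" using ginc[OF zv(1)] J.dual_core[OF zv(1)] zv(2) be0 by simp
  then have "g (z - f0) = 0" using g(1) K_def by (simp add: linear_diff)
  then show False using gz by simp
qed

lemma Lf_ge_comb: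
  assumes "1 \<le> Lf x" "1 \<le> Lf y" "0 \<le> u" "0 \<le> v" "u + v = 1"
  shows "1 \<le> Lf (u *\<^sub>R x + v *\<^sub>R y)"
proof -
  have "Lf (u *\<^sub>R x + v *\<^sub>R y) = u * Lf x + v * Lf y"
    using Lf_linear by (simp add: linear_add linear_scale)
  moreover have "u * Lf x \<ge> u * 1" using assms by (intro mult_left_mono) auto
  moreover have "v * Lf y \<ge> v * 1" using assms by (intro mult_left_mono) auto
  ultimately show ?thesis using assms by simp
qed

lemma Lf_eq_comb:
  assumes "Lf x = 1" "Lf y = 1" "u + v = 1"
  shows "Lf (u *\<^sub>R x + v *\<^sub>R y) = 1"
proof -
  have "Lf (u *\<^sub>R x + v *\<^sub>R y) = u * Lf x + v * Lf y"
    using Lf_linear by (simp add: linear_add linear_scale)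
  then show ?thesis using assms by simp
qed

lemma seg_tight:
  assumes "1 \<le> a" "1 \<le> b" "0 < u" "u < 1" "(1 - u) * a + u * b = (1::real)"
  shows "a = 1 \<and> b = 1"
proof (rule ccontr)
  assume "\<not> (a = 1 \<and> b = 1)"
  then have "a > 1 \<or> b > 1" using assms by auto
  moreover have "(1 - u) * (a - 1) \<ge> 0" "u * (b - 1) \<ge> 0" using assms by auto
  moreover have "a > 1 \<Longrightarrow> (1 - u) * (a - 1) > 0" using assms by simp
  moreover have "b > 1 \<Longrightarrow> u * (b - 1) > 0" using assms by simp
  moreover have "(1 - u) * (a - 1) + u * (b - 1) = 0" using assms(5) by (simp add: algebra_simps)
  ultimately show False by linarith
qed

theorem main_JS:
  "(\<forall>x\<in>pathPolytope n p. jump_lhs n p S x \<ge> 1)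
    \<and> is_facet {x \<in> pathPolytope n p. jump_lhs n p S x = 1} (pathPolytope n p)"
proof -
  define P where "P = convex hull PX"
  define F where "F = {x \<in> P. Lf x = 1}"
  have Pdef: "pathPolytope n p = P" by (simp add: pathPolytope_def PX_def P_def)
  have Fdef: "{x \<in> pathPolytope n p. jump_lhs n p S x = 1} = F" by (simp add: Pdef F_def jump_Lf)
  have valid: "\<forall>x\<in>P. 1 \<le> Lf x"
  proof -
    have "P \<subseteq> {x. 1 \<le> Lf x}" unfolding P_def
    proof (rule hull_minimal)
      show "PX \<subseteq> {x. 1 \<le> Lf x}" using PX_valid by auto
      show "convex {x. 1 \<le> Lf x}" unfolding convex_def
        using Lf_ge_comb by simp
    qed
    then show ?thesis by auto
  qed
  have convP: "convex P" unfolding P_def by (rule convex_convex_hull)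
  have face: "F face_of P"
    unfolding face_of_def
  proof (intro conjI ballI impI)
    show "F \<subseteq> P" unfolding F_def by auto
    have "convex {x. Lf x = 1}" unfolding convex_def using Lf_eq_comb by simp
    moreover have "F = P \<inter> {x. Lf x = 1}" unfolding F_def by auto
    ultimately show "convex F" using convP by (simp add: convex_Int)
  next
    fix a b x assume a: "a \<in> P" and b: "b \<in> P" and x: "x \<in> F" and xs: "x \<in> open_segment a b"
    obtain u where u: "0 < u" "u < 1" "x = (1 - u) *\<^sub>R a + u *\<^sub>R b" using xs by (auto simp: in_segment)
    have "Lf x = (1 - u) * Lf a + u * Lf b" using u(3) Lf_comb by simp
    moreover have "Lf x = 1" using x by (simp add: F_def)
    ultimately have "Lf a = 1 \<and> Lf b = 1" using seg_tight[of "Lf a" "Lf b" u] valid a b u by simp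
    then show "a \<in> F" "b \<in> F" using a b by (auto simp: F_def)
  qed
  obtain f0v where f0v: "is_pPath n p f0v" "ell f0v = 1" using tight_exists by blast
  obtain x0v where x0v: "is_pPath n p x0v" "ell x0v = 2" using two_exists by blast
  define f0 where "f0 = incidence f0v"
  define x0 where "x0 = incidence x0v"
  have f0PX: "f0 \<in> PX" using f0v by (auto simp: PX_def f0_def)
  have x0PX: "x0 \<in> PX" using x0v by (auto simp: PX_def x0_def)
  have Lf0: "Lf f0 = 1" using jump_incidence[OF f0v(1)] jump_Lf f0v f0_def by simp
  have Lx0: "Lf x0 = 2" using jump_incidence[OF x0v(1)] jump_Lf x0v x0_def by simp
  have f0P: "f0 \<in> P" unfolding P_def using f0PX by (rule hull_inc)
  have x0P: "x0 \<in> P" unfolding P_def using x0PX by (rule hull_inc)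
  have f0F: "f0 \<in> F" using f0P Lf0 by (simp add: F_def)
  define H where "H = insert (x0 - f0) ((\<lambda>z. z - f0) ` {z \<in> PX. Lf z = 1})"
  have finH: "finite H" unfolding H_def using finite_PX by simp
  have spanPX: "z - f0 \<in> span H" if "z \<in> PX" for z
    using span_claim[OF f0_def f0v x0_def x0v H_def that] .
  have spanP: "x - f0 \<in> span H" if "x \<in> P" for x
  proof -
    have "P \<subseteq> {x. x - f0 \<in> span H}" unfolding P_def
    proof (rule hull_minimal)
      show "PX \<subseteq> {x. x - f0 \<in> span H}" using spanPX by auto
      show "convex {x. x - f0 \<in> span H}" unfolding convex_def
      proof (intro ballI allI impI)
        fix x y :: "nat \<times> nat \<Rightarrow> real" and u v :: real
        assume x: "x \<in> {x. x - f0 \<in> span H}" and y: "y \<in> {x. x - f0 \<in> span H}" and uv: "0 \<le> u" "0 \<le> v" "u + v = 1"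
        have "u *\<^sub>R x + v *\<^sub>R y - f0 = u *\<^sub>R (x - f0) + v *\<^sub>R (y - f0)"
        proof -
          have "f0 = (u + v) *\<^sub>R f0" using uv by simp
          then show ?thesis by (simp add: algebra_simps)
        qed
        moreover have "u *\<^sub>R (x - f0) + v *\<^sub>R (y - f0) \<in> span H"
          using x y by (intro span_add span_scale) auto
        ultimately show "u *\<^sub>R x + v *\<^sub>R y \<in> {x. x - f0 \<in> span H}" by simp
      qed
    qed
    then show ?thesis using that by auto
  qed
  define DP where "DP = {x - y | x y. x \<in> P \<and> y \<in> P}"
  define DF where "DF = {x - y | x y. x \<in> F \<and> y \<in> F}"
  have DPspan: "DP \<subseteq> span H"
  proof
    fix d assume "d \<in> DP"
    then obtain x y where xy: "x \<in> P" "y \<in> P" "d = x - y" by (auto simp: DP_def)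
    have "(x - f0) - (y - f0) \<in> span H" by (rule span_diff) (use spanP xy in auto)
    then show "d \<in> span H" using xy by simp
  qed
  have DFDP: "DF \<subseteq> DP" unfolding DF_def DP_def F_def by auto
  have LDF: "Lf d = 0" if "d \<in> DF" for d
    using that Lf_diff by (auto simp: DF_def F_def)
  have GDF: "z - f0 \<in> DF" if "z \<in> PX" "Lf z = 1" for z
  proof -
    have "z \<in> P" unfolding P_def using that(1) by (rule hull_inc)
    then have "z \<in> F" using that by (simp add: F_def)
    then show ?thesis using f0F by (auto simp: DF_def)
  qed
  obtain BF where BF: "BF \<subseteq> DF" "independent BF" "DF \<subseteq> span BF" "card BF = dim DF"
    using basis_exists[of DF] by blast
  have finBF: "finite BF"
    using independent_span_bound[OF finH BF(2)] BF(1) DFDP DPspan by blast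
  define d0 where "d0 = x0 - f0"
  have d0DP: "d0 \<in> DP" using x0P f0P by (auto simp: DP_def d0_def)
  have Ld0: "Lf d0 = 1" using Lf_diff Lx0 Lf0 by (simp add: d0_def)
  have d0nspan: "d0 \<notin> span BF"
  proof
    assume "d0 \<in> span BF"
    moreover have "\<And>b. b \<in> BF \<Longrightarrow> Lf b = 0" using BF(1) LDF by blast
    ultimately have "Lf d0 = 0" using linear_eq_0_on_span[OF Lf_linear, of BF d0] by blast
    then show False using Ld0 by simp
  qed
  have d0nBF: "d0 \<notin> BF" using d0nspan span_base by blast
  have cardI: "card (insert d0 BF) = dim DF + 1" using finBF d0nBF BF(4) by simp
  have up: "dim DP \<le> dim DF + 1"
  proof -
    have "H \<subseteq> span (insert d0 BF)"
    proof
      fix h assume "h \<in> H"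
      then consider "h = d0" | z where "z \<in> PX" "Lf z = 1" "h = z - f0" unfolding H_def d0_def by blast
      then show "h \<in> span (insert d0 BF)"
      proof cases
        case 1 then show ?thesis by (simp add: span_base)
      next
        case 2
        then have "h \<in> span BF" using GDF BF(3) by blast
        then show ?thesis using span_mono[of BF "insert d0 BF"] by blast
      qed
    qed
    then have "span H \<subseteq> span (insert d0 BF)" by (simp add: span_minimal)
    then have "DP \<subseteq> span (insert d0 BF)" using DPspan by blast
    then have "dim DP \<le> card (insert d0 BF)" using finBF by (intro dim_le_card) auto
    then show ?thesis using cardI by simp
  qed
  have low: "dim DF + 1 \<le> dim DP"
  proof -
    obtain BP where BP: "BP \<subseteq> DP" "independent BP" "DP \<subseteq> span BP" "card BP = dim DP"
      using basis_exists[of DP] by blast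
    have finBP: "finite BP" using independent_span_bound[OF finH BP(2)] BP(1) DPspan by blast
    have indI: "independent (insert d0 BF)" by (rule independent_insertI[OF d0nspan BF(2)])
    have "insert d0 BF \<subseteq> span BP" using d0DP BF(1) DFDP BP(3) by blast
    then have "card (insert d0 BF) \<le> card BP" using independent_span_bound[OF finBP indI] by blast
    then show ?thesis using cardI BP(4) by simp
  qed
  have dimeq: "dim DP = dim DF + 1" using up low by simp
  have PnE: "P \<noteq> {}" using f0P by blast
  have FnE: "F \<noteq> {}" using f0F by blast
  have "adim F = adim P - 1"
    unfolding adim_def using PnE FnE dimeq DP_def DF_def by simp
  then have "is_facet F P" using face by (simp add: is_facet_def)
  then show ?thesis using valid Pdef Fdef jump_Lf by simp
qed

end

theorem mainTheorem10:
  fixes n p :: nat and S :: "nat \<Rightarrow> nat set"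
  assumes "n > 0"
    and "p \<ge> 4"
    and "\<And>i. i \<le> p + 1 \<Longrightarrow> S i \<subseteq> {0..n}"
    and "(\<Union>i\<in>{0..p+1}. S i) = {0..n}"
    and "\<And>i j. i \<le> p + 1 \<Longrightarrow> j \<le> p + 1 \<Longrightarrow> i \<noteq> j \<Longrightarrow> S i \<inter> S j = {}"
    and "S 0 = {0}"
    and "S (p + 1) = {n}"
    and "\<And>i. 1 \<le> i \<Longrightarrow> i \<le> p \<Longrightarrow> card (S i) \<ge> 2"
  shows "(\<forall>x\<in>pathPolytope n p. jump_lhs n p S x \<ge> 1)
    \<and> is_facet {x \<in> pathPolytope n p. jump_lhs n p S x = 1} (pathPolytope n p)"
proof -
  interpret JS n p S
    by unfold_locales (use assms in auto)
  show ?thesis by (rule main_JS)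
qed

end
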